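(* Let $H$, $\sigma(H)$, $\Sigma$, $\mathcal D$ and $\rho$ be as below. Then (a) for each $d\in\mathcal D$ there is a unique arrow $\alpha_d\in a(H)$ with $s(\alpha_d)=d$, and $t(\alpha_d)=\rho(d)$; (b) if $d\in\mathcal D$ and $\beta\in a(H)$ satisfies $s(\beta)=\rho(d)$, then $\beta\alpha_d\in\langle\sigma(H)\rangle$.
   Context: $k$ is a field. For a finite quiver $H$ with vertex set $v(H)$ and arrow set $a(H)$, $s(p),t(p)$ denote start and terminal vertices of a path $p$, $e_x$ the trivial path at $x$, and $kH$ the path algebra, where $\beta\alpha$ denotes the path "first $\alpha$, then $\beta$". Standing setting: $H$ is a finite quiver and $\sigma(H)\subset kH$ a set of relations such that $\langle a(H)\rangle^m\subseteq\langle\sigma(H)\rangle\subseteq\langle a(H)\rangle^2$ for some $m\ge1$ (where $\langle X\rangle$ is the two-sided ideal generated by $X$); $\Sigma=kH/\langle\sigma(H)\rangle$ is finite-dimensional and satisfies condition (F): the radical of each indecomposable finitely generated projective left $\Sigma$-module is projective or simple. For $z\in v(H)$, $\hat e_z$ is the image of $e_z$, $P_z=\Sigma\hat e_z$ and $S_z$ the associated simple module. Set $\mathcal D=\{d\in v(H): \ell(P_d)=2$ and $\operatorname{Soc}P_d$ is not projective$\}$ and define $\rho:\mathcal D\to v(H)$ by $\rho(d)=y$ where $S_y\cong\operatorname{Soc}P_d$. *)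

theory Defs
  imports Main
begin

record ('v,'e) quiver =
  verts :: "'v set"
  arrs  :: "'e set"
  src   :: "'e \<Rightarrow> 'v"
  tgt   :: "'e \<Rightarrow> 'v"

text \<open>A path is a start vertex together with the list of its arrows in order of traversal;
  the trivial path e_x is (x, []).\<close>
type_synonym ('v,'e) path = "'v \<times> 'e list"
text \<open>Elements of kH: k-valued functions on paths (finitely supported, on valid paths).\<close>
type_synonym ('v,'e,'k) elem = "('v,'e) path \<Rightarrow> 'k"

definition path_end :: "('v,'e) quiver \<Rightarrow> ('v,'e) path \<Rightarrow> 'v" where
  "path_end Q p = (if snd p = [] then fst p else tgt Q (last (snd p)))"

definition valid_path :: "('v,'e) quiver \<Rightarrow> ('v,'e) path \<Rightarrow> bool" where
  "valid_path Q p \<longleftrightarrow> fst p \<in> verts Q \<and> set (snd p) \<subseteq> arrs Q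
     \<and> (snd p \<noteq> [] \<longrightarrow> src Q (hd (snd p)) = fst p)
     \<and> (\<forall>i. Suc i < length (snd p) \<longrightarrow> tgt Q (snd p ! i) = src Q (snd p ! Suc i))"

definition kH :: "('v,'e) quiver \<Rightarrow> ('v,'e,'k::field) elem set" where
  "kH Q = {f. finite {p. f p \<noteq> 0} \<and> (\<forall>p. f p \<noteq> 0 \<longrightarrow> valid_path Q p)}"

definition pbasis :: "('v,'e) path \<Rightarrow> ('v,'e,'k::field) elem" where
  "pbasis p = (\<lambda>q. if q = p then 1 else 0)"

definition arr :: "('v,'e) quiver \<Rightarrow> 'e \<Rightarrow> ('v,'e,'k::field) elem" where
  "arr Q a = pbasis (src Q a, [a])"

definition pzero :: "('v,'e,'k::field) elem" where
  "pzero = (\<lambda>p. 0)"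

definition padd :: "('v,'e,'k::field) elem \<Rightarrow> ('v,'e,'k) elem \<Rightarrow> ('v,'e,'k) elem" where
  "padd f g = (\<lambda>p. f p + g p)"

definition psub :: "('v,'e,'k::field) elem \<Rightarrow> ('v,'e,'k) elem \<Rightarrow> ('v,'e,'k) elem" where
  "psub f g = (\<lambda>p. f p - g p)"

text \<open>Multiplication of kH: pmult Q f g is "f g", i.e. first (a path of) g, then f
  (so that the product of arrows beta, alpha is the path "first alpha, then beta").
  A path r = (x, as) decomposes as "first (x, take i as), then (end, drop i as)".\<close>
definition pmult :: "('v,'e) quiver \<Rightarrow> ('v,'e,'k::field) elem \<Rightarrow> ('v,'e,'k) elem \<Rightarrow> ('v,'e,'k) elem" where
  "pmult Q f g = (\<lambda>r. if valid_path Q r then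
      (\<Sum>i\<in>{0..length (snd r)}.
          f (path_end Q (fst r, take i (snd r)), drop i (snd r)) * g (fst r, take i (snd r)))
      else 0)"

inductive_set ideal_gen :: "('v,'e) quiver \<Rightarrow> ('v,'e,'k::field) elem set \<Rightarrow> ('v,'e,'k) elem set"
  for Q :: "('v,'e) quiver" and X :: "('v,'e,'k) elem set" where
  gen: "x \<in> X \<Longrightarrow> x \<in> ideal_gen Q X"
| zero: "pzero \<in> ideal_gen Q X"
| add: "a \<in> ideal_gen Q X \<Longrightarrow> b \<in> ideal_gen Q X \<Longrightarrow> padd a b \<in> ideal_gen Q X"
| mult: "a \<in> ideal_gen Q X \<Longrightarrow> u \<in> kH Q \<Longrightarrow> w \<in> kH Q \<Longrightarrow>
           pmult Q u (pmult Q a w) \<in> ideal_gen Q X"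

definition arrow_ideal :: "('v,'e) quiver \<Rightarrow> ('v,'e,'k::field) elem set" where
  "arrow_ideal Q = ideal_gen Q {arr Q a | a. a \<in> arrs Q}"

primrec ideal_pow :: "('v,'e) quiver \<Rightarrow> ('v,'e,'k::field) elem set \<Rightarrow> nat \<Rightarrow> ('v,'e,'k) elem set" where
  "ideal_pow Q J 0 = kH Q"
| "ideal_pow Q J (Suc n) = ideal_gen Q {pmult Q x y | x y. x \<in> ideal_pow Q J n \<and> y \<in> J}"

definition fin_dim_quot :: "('v,'e) quiver \<Rightarrow> ('v,'e,'k::field) elem set \<Rightarrow> bool" where
  "fin_dim_quot Q I \<longleftrightarrow> (\<exists>B. finite B \<and> B \<subseteq> kH Q \<and>
      (\<forall>f\<in>kH Q. \<exists>c. psub f (\<lambda>p. \<Sum>b\<in>B. c b * b p) \<in> I))"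

text \<open>Modules are represented as subquotients L / L0 of the left kH-module kH^N
  (vectors indexed by nat), with I acting trivially on L / L0. Every finitely generated
  Sigma-module is (isomorphic to) such a subquotient, namely a quotient of Sigma^n.\<close>
type_synonym ('v,'e,'k) vec = "nat \<Rightarrow> ('v,'e,'k) elem"
type_synonym ('v,'e,'k) smodule = "('v,'e,'k) vec set \<times> ('v,'e,'k) vec set"

definition vzero :: "('v,'e,'k::field) vec" where
  "vzero = (\<lambda>i. pzero)"

definition vadd :: "('v,'e,'k::field) vec \<Rightarrow> ('v,'e,'k) vec \<Rightarrow> ('v,'e,'k) vec" where
  "vadd v w = (\<lambda>i. padd (v i) (w i))"

definition vsub :: "('v,'e,'k::field) vec \<Rightarrow> ('v,'e,'k) vec \<Rightarrow> ('v,'e,'k) vec" where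
  "vsub v w = (\<lambda>i. psub (v i) (w i))"

definition vact :: "('v,'e) quiver \<Rightarrow> ('v,'e,'k::field) elem \<Rightarrow> ('v,'e,'k) vec \<Rightarrow> ('v,'e,'k) vec" where
  "vact Q u v = (\<lambda>i. pmult Q u (v i))"

definition submod :: "('v,'e) quiver \<Rightarrow> ('v,'e,'k::field) vec set \<Rightarrow> bool" where
  "submod Q N \<longleftrightarrow> (\<forall>v\<in>N. \<forall>i. v i \<in> kH Q) \<and> vzero \<in> N
      \<and> (\<forall>v\<in>N. \<forall>w\<in>N. vadd v w \<in> N) \<and> (\<forall>u\<in>kH Q. \<forall>v\<in>N. vact Q u v \<in> N)"

definition smod :: "('v,'e) quiver \<Rightarrow> ('v,'e,'k::field) elem set \<Rightarrow> ('v,'e,'k) smodule \<Rightarrow> bool" where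
  "smod Q I M \<longleftrightarrow> submod Q (fst M) \<and> submod Q (snd M) \<and> snd M \<subseteq> fst M
      \<and> (\<forall>u\<in>I. \<forall>v\<in>fst M. vact Q u v \<in> snd M)"

text \<open>Submodules of L/L0 correspond to submodules N with L0 \<subseteq> N \<subseteq> L.\<close>
definition submods :: "('v,'e) quiver \<Rightarrow> ('v,'e,'k::field) smodule \<Rightarrow> ('v,'e,'k) vec set set" where
  "submods Q M = {N. submod Q N \<and> snd M \<subseteq> N \<and> N \<subseteq> fst M}"

definition simple_mod :: "('v,'e) quiver \<Rightarrow> ('v,'e,'k::field) smodule \<Rightarrow> bool" where
  "simple_mod Q M \<longleftrightarrow> fst M \<noteq> snd M \<and> (\<forall>N\<in>submods Q M. N = snd M \<or> N = fst M)"

definition has_chain :: "('v,'e) quiver \<Rightarrow> ('v,'e,'k::field) smodule \<Rightarrow> nat \<Rightarrow> bool" where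
  "has_chain Q M n \<longleftrightarrow> (\<exists>c. c 0 = snd M \<and> c n = fst M \<and> (\<forall>i\<le>n. c i \<in> submods Q M)
      \<and> (\<forall>i<n. c i \<subset> c (Suc i)))"

definition mod_length :: "('v,'e) quiver \<Rightarrow> ('v,'e,'k::field) smodule \<Rightarrow> nat" where
  "mod_length Q M = (GREATEST n. has_chain Q M n)"

definition maximal_sub :: "('v,'e) quiver \<Rightarrow> ('v,'e,'k::field) smodule \<Rightarrow> ('v,'e,'k) vec set \<Rightarrow> bool" where
  "maximal_sub Q M N \<longleftrightarrow> N \<in> submods Q M \<and> N \<noteq> fst M
      \<and> (\<forall>N'\<in>submods Q M. N \<subseteq> N' \<longrightarrow> N' = N \<or> N' = fst M)"

definition rad :: "('v,'e) quiver \<Rightarrow> ('v,'e,'k::field) smodule \<Rightarrow> ('v,'e,'k) smodule" where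
  "rad Q M = (fst M \<inter> \<Inter>{N. maximal_sub Q M N}, snd M)"

definition soc :: "('v,'e) quiver \<Rightarrow> ('v,'e,'k::field) smodule \<Rightarrow> ('v,'e,'k) smodule" where
  "soc Q M = (\<Inter>{S. S \<in> submods Q M \<and>
                 (\<forall>N\<in>submods Q M. simple_mod Q (N, snd M) \<longrightarrow> N \<subseteq> S)}, snd M)"

text \<open>Isomorphism of the modules L/L0 and M/M0 (phi is a lift of the isomorphism to L).\<close>
definition mod_iso :: "('v,'e) quiver \<Rightarrow> ('v,'e,'k::field) smodule \<Rightarrow> ('v,'e,'k) smodule \<Rightarrow> bool" where
  "mod_iso Q A B \<longleftrightarrow> (\<exists>\<phi>. (\<forall>x\<in>fst A. \<phi> x \<in> fst B)
      \<and> (\<forall>x\<in>fst A. \<forall>y\<in>fst A. vsub (\<phi> (vadd x y)) (vadd (\<phi> x) (\<phi> y)) \<in> snd B)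
      \<and> (\<forall>u\<in>kH Q. \<forall>x\<in>fst A. vsub (\<phi> (vact Q u x)) (vact Q u (\<phi> x)) \<in> snd B)
      \<and> (\<forall>x\<in>fst A. \<phi> x \<in> snd B \<longleftrightarrow> x \<in> snd A)
      \<and> (\<forall>y\<in>fst B. \<exists>x\<in>fst A. vsub y (\<phi> x) \<in> snd B))"

definition is_dsum :: "('v,'e) quiver \<Rightarrow> ('v,'e,'k::field) smodule \<Rightarrow> ('v,'e,'k) vec set \<Rightarrow> ('v,'e,'k) vec set \<Rightarrow> bool" where
  "is_dsum Q M X Y \<longleftrightarrow> X \<in> submods Q M \<and> Y \<in> submods Q M \<and> X \<inter> Y = snd M
      \<and> (\<forall>v\<in>fst M. \<exists>x\<in>X. \<exists>y\<in>Y. v = vadd x y)"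

definition free_mod :: "('v,'e) quiver \<Rightarrow> ('v,'e,'k::field) elem set \<Rightarrow> nat \<Rightarrow> ('v,'e,'k) smodule" where
  "free_mod Q I n = ({v. (\<forall>i. v i \<in> kH Q) \<and> (\<forall>i\<ge>n. v i = pzero)},
                     {v. (\<forall>i. v i \<in> I) \<and> (\<forall>i\<ge>n. v i = pzero)})"

definition projective :: "('v,'e) quiver \<Rightarrow> ('v,'e,'k::field) elem set \<Rightarrow> ('v,'e,'k) smodule \<Rightarrow> bool" where
  "projective Q I M \<longleftrightarrow> (\<exists>n X Y. is_dsum Q (free_mod Q I n) X Y
      \<and> mod_iso Q M (X, snd (free_mod Q I n)))"

definition fin_gen :: "('v,'e) quiver \<Rightarrow> ('v,'e,'k::field) smodule \<Rightarrow> bool" where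
  "fin_gen Q M \<longleftrightarrow> (\<exists>G. finite G \<and> G \<subseteq> fst M \<and>
      (\<forall>S. submod Q S \<and> snd M \<subseteq> S \<and> G \<subseteq> S \<longrightarrow> fst M \<subseteq> S))"

definition indecomposable :: "('v,'e) quiver \<Rightarrow> ('v,'e,'k::field) smodule \<Rightarrow> bool" where
  "indecomposable Q M \<longleftrightarrow> fst M \<noteq> snd M \<and>
      (\<forall>X Y. is_dsum Q M X Y \<longrightarrow> X = snd M \<or> Y = snd M)"

definition condF :: "('v,'e) quiver \<Rightarrow> ('v,'e,'k::field) elem set \<Rightarrow> bool" where
  "condF Q I \<longleftrightarrow> (\<forall>M. smod Q I M \<and> fin_gen Q M \<and> indecomposable Q M \<and> projective Q I M
      \<longrightarrow> projective Q I (rad Q M) \<or> simple_mod Q (rad Q M))"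

definition emb :: "('v,'e,'k::field) elem \<Rightarrow> ('v,'e,'k) vec" where
  "emb f = (\<lambda>i. if i = 0 then f else pzero)"

text \<open>P_z = Sigma e_z, as the submodule (kH e_z + I)/I of Sigma = kH/I.\<close>
definition Pmod :: "('v,'e) quiver \<Rightarrow> ('v,'e,'k::field) elem set \<Rightarrow> 'v \<Rightarrow> ('v,'e,'k) smodule" where
  "Pmod Q I z = ({emb (padd (pmult Q f (pbasis (z, []))) g) | f g. f \<in> kH Q \<and> g \<in> I}, emb ` I)"

definition Smod :: "('v,'e) quiver \<Rightarrow> ('v,'e,'k::field) elem set \<Rightarrow> 'v \<Rightarrow> ('v,'e,'k) smodule" where
  "Smod Q I z = (fst (Pmod Q I z), fst (rad Q (Pmod Q I z)))"

definition Dset :: "('v,'e) quiver \<Rightarrow> ('v,'e,'k::field) elem set \<Rightarrow> 'v set" where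
  "Dset Q I = {d \<in> verts Q. mod_length Q (Pmod Q I d) = 2 \<and> \<not> projective Q I (soc Q (Pmod Q I d))}"

definition rho :: "('v,'e) quiver \<Rightarrow> ('v,'e,'k::field) elem set \<Rightarrow> 'v \<Rightarrow> 'v" where
  "rho Q I d = (THE y. y \<in> verts Q \<and> mod_iso Q (Smod Q I y) (soc Q (Pmod Q I d)))"

end

theory Submission
  imports Defs "HOL-Library.Function_Algebras" "HOL.Vector_Spaces"
begin

definition smul :: "'k \<Rightarrow> ('v,'e,'k::field) elem \<Rightarrow> ('v,'e,'k) elem" where
  "smul c f = (\<lambda>p. c * f p)"
definition one :: "('v,'e) quiver \<Rightarrow> ('v,'e,'k::field) elem" where
  "one Q = (\<lambda>p. if snd p = [] \<and> fst p \<in> verts Q then 1 else 0)"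
definition idem :: "'v \<Rightarrow> ('v,'e,'k::field) elem" where
  "idem x = pbasis (x, [])"
definition dsupp :: "'v \<Rightarrow> ('v,'e,'k::field) elem \<Rightarrow> bool" where
  "dsupp x h \<longleftrightarrow> (\<forall>r. h r \<noteq> 0 \<longrightarrow> fst r = x)"
definition lsupp :: "nat \<Rightarrow> ('v,'e,'k::field) elem \<Rightarrow> bool" where
  "lsupp n h \<longleftrightarrow> (\<forall>r. h r \<noteq> 0 \<longrightarrow> n \<le> length (snd r))"

lemma valid_Nil[simp]: "valid_path Q (x, []) \<longleftrightarrow> x \<in> verts Q"
  by (simp add: valid_path_def)

lemma path_end_Nil[simp]: "path_end Q (x, []) = x"
  by (simp add: path_end_def)

lemma path_end_Cons[simp]: "path_end Q (x, a # ys) = path_end Q (tgt Q a, ys)"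
  by (simp add: path_end_def)

lemma valid_Cons:
  assumes wf: "\<forall>a\<in>arrs Q. src Q a \<in> verts Q \<and> tgt Q a \<in> verts Q"
  shows "valid_path Q (x, a # ys) \<longleftrightarrow> x \<in> verts Q \<and> a \<in> arrs Q \<and> src Q a = x \<and> valid_path Q (tgt Q a, ys)"
proof -
  have A: "(\<forall>i. i < length ys \<longrightarrow> tgt Q ((a # ys) ! i) = src Q (ys ! i))
      \<longleftrightarrow> (ys \<noteq> [] \<longrightarrow> src Q (hd ys) = tgt Q a) \<and> (\<forall>i. Suc i < length ys \<longrightarrow> tgt Q (ys ! i) = src Q (ys ! Suc i))"
  proof
    assume H: "\<forall>i. i < length ys \<longrightarrow> tgt Q ((a # ys) ! i) = src Q (ys ! i)"
    show "(ys \<noteq> [] \<longrightarrow> src Q (hd ys) = tgt Q a) \<and> (\<forall>i. Suc i < length ys \<longrightarrow> tgt Q (ys ! i) = src Q (ys ! Suc i))"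
    proof (intro conjI impI allI)
      assume "ys \<noteq> []" then show "src Q (hd ys) = tgt Q a" using H[rule_format, of 0]
        by (cases ys) auto
    next
      fix i assume "Suc i < length ys" then show "tgt Q (ys ! i) = src Q (ys ! Suc i)"
        using H[rule_format, of "Suc i"] by auto
    qed
  next
    assume H: "(ys \<noteq> [] \<longrightarrow> src Q (hd ys) = tgt Q a) \<and> (\<forall>i. Suc i < length ys \<longrightarrow> tgt Q (ys ! i) = src Q (ys ! Suc i))"
    show "\<forall>i. i < length ys \<longrightarrow> tgt Q ((a # ys) ! i) = src Q (ys ! i)"
    proof (intro allI impI)
      fix i assume "i < length ys"
      then show "tgt Q ((a # ys) ! i) = src Q (ys ! i)"
        using H by (cases i; cases ys) auto
    qed
  qed
  show ?thesis
    unfolding valid_path_def using wf by (simp add: A) blast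
qed

lemma valid_take:
  assumes wf: "\<forall>a\<in>arrs Q. src Q a \<in> verts Q \<and> tgt Q a \<in> verts Q"
  shows "valid_path Q (x, xs) \<Longrightarrow> valid_path Q (x, take i xs)"
proof (induction xs arbitrary: x i)
  case Nil then show ?case by simp
next
  case (Cons a ys)
  then show ?case by (cases i) (auto simp: valid_Cons[OF wf])
qed

lemma valid_drop:
  assumes wf: "\<forall>a\<in>arrs Q. src Q a \<in> verts Q \<and> tgt Q a \<in> verts Q"
  shows "valid_path Q (x, xs) \<Longrightarrow> valid_path Q (path_end Q (x, take i xs), drop i xs)"
proof (induction xs arbitrary: x i)
  case Nil then show ?case by simp
next
  case (Cons a ys)
  then show ?case by (cases i) (auto simp: valid_Cons[OF wf])
qed

lemma valid_path_end:
  assumes wf: "\<forall>a\<in>arrs Q. src Q a \<in> verts Q \<and> tgt Q a \<in> verts Q"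
  shows "valid_path Q (x, xs) \<Longrightarrow> path_end Q (x, xs) \<in> verts Q"
proof (induction xs arbitrary: x)
  case Nil then show ?case by simp
next
  case (Cons a ys)
  then show ?case by (auto simp: valid_Cons[OF wf])
qed

lemma pm_nz:
  assumes "pmult Q f g r \<noteq> 0"
  shows "valid_path Q r \<and> (\<exists>i\<le>length (snd r). f (path_end Q (fst r, take i (snd r)), drop i (snd r)) \<noteq> 0
           \<and> g (fst r, take i (snd r)) \<noteq> 0)"
proof -
  have v: "valid_path Q r" using assms by (auto simp: pmult_def split: if_splits)
  then have "(\<Sum>i\<in>{0..length (snd r)}.
          f (path_end Q (fst r, take i (snd r)), drop i (snd r)) * g (fst r, take i (snd r))) \<noteq> 0"
    using assms by (simp add: pmult_def)
  then obtain i where "i \<in> {0..length (snd r)}"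
    "f (path_end Q (fst r, take i (snd r)), drop i (snd r)) * g (fst r, take i (snd r)) \<noteq> 0"
    by (meson sum.not_neutral_contains_not_neutral)
  then show ?thesis using v by auto
qed

lemma pzero_apply[simp]: "pzero p = 0" by (simp add: pzero_def)
lemma padd_apply[simp]: "padd f g p = f p + g p" by (simp add: padd_def)
lemma psub_apply[simp]: "psub f g p = f p - g p" by (simp add: psub_def)
lemma smul_apply[simp]: "smul c f p = c * f p" by (simp add: smul_def)
lemma pbasis_apply: "pbasis p q = (if q = p then 1 else 0)" by (simp add: pbasis_def)

lemma kH_iff: "f \<in> kH Q \<longleftrightarrow> finite {p. f p \<noteq> 0} \<and> (\<forall>p. f p \<noteq> 0 \<longrightarrow> valid_path Q p)"
  by (simp add: kH_def)

lemma kH_valid: "f \<in> kH Q \<Longrightarrow> f p \<noteq> 0 \<Longrightarrow> valid_path Q p"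
  unfolding kH_def by blast

lemma pzero_kH[simp]: "pzero \<in> kH Q" by (simp add: kH_def)

lemma padd_kH: "f \<in> kH Q \<Longrightarrow> g \<in> kH Q \<Longrightarrow> padd f g \<in> kH Q"
proof -
  assume f: "f \<in> kH Q" and g: "g \<in> kH Q"
  have "{p. padd f g p \<noteq> 0} \<subseteq> {p. f p \<noteq> 0} \<union> {p. g p \<noteq> 0}" by auto
  then show ?thesis using f g unfolding kH_def by (auto intro: finite_subset)
qed

lemma smul_kH: "f \<in> kH Q \<Longrightarrow> smul c f \<in> kH Q"
proof -
  assume f: "f \<in> kH Q"
  have "{p. smul c f p \<noteq> 0} \<subseteq> {p. f p \<noteq> 0}" by auto
  then show ?thesis using f unfolding kH_def by (auto intro: finite_subset)
qed

lemma psub_kH: "f \<in> kH Q \<Longrightarrow> g \<in> kH Q \<Longrightarrow> psub f g \<in> kH Q"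
proof -
  assume f: "f \<in> kH Q" and g: "g \<in> kH Q"
  have "{p. psub f g p \<noteq> 0} \<subseteq> {p. f p \<noteq> 0} \<union> {p. g p \<noteq> 0}" by auto
  then show ?thesis using f g unfolding kH_def by (auto intro: finite_subset)
qed

lemma pbasis_kH: "valid_path Q p \<Longrightarrow> pbasis p \<in> kH Q"
  unfolding kH_def pbasis_def by auto

lemma one_kH: "finite (verts Q) \<Longrightarrow> one Q \<in> kH Q"
proof -
  assume fv: "finite (verts Q)"
  have "{p. one Q p \<noteq> (0::'k::field)} \<subseteq> (\<lambda>x. (x, [])) ` verts Q"
    by (auto simp: one_def)
  then have fin: "finite {p. one Q p \<noteq> (0::'k::field)}" using fv by (auto intro: finite_subset)
  show ?thesis
  proof (unfold kH_def, intro CollectI conjI allI impI)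
    show "finite {p. one Q p \<noteq> (0::'k::field)}" by (fact fin)
  next
    fix p assume "one Q p \<noteq> (0::'k::field)"
    then show "valid_path Q p" by (cases p) (auto simp: one_def split: if_splits)
  qed
qed

lemma pm_kH:
  assumes f: "f \<in> kH Q" and g: "g \<in> kH Q"
  shows "pmult Q f g \<in> kH Q"
proof -
  have "{r. pmult Q f g r \<noteq> 0} \<subseteq> (\<lambda>(p,q). (fst q, snd q @ snd p)) ` ({p. f p \<noteq> 0} \<times> {q. g q \<noteq> 0})"
  proof
    fix r assume "r \<in> {r. pmult Q f g r \<noteq> 0}"
    then obtain i where "f (path_end Q (fst r, take i (snd r)), drop i (snd r)) \<noteq> 0"
        "g (fst r, take i (snd r)) \<noteq> 0" using pm_nz by blast
    moreover have "r = (\<lambda>(p,q). (fst q, snd q @ snd p)) ((path_end Q (fst r, take i (snd r)), drop i (snd r)), (fst r, take i (snd r)))" by simp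
    ultimately show "r \<in> (\<lambda>(p,q). (fst q, snd q @ snd p)) ` ({p. f p \<noteq> 0} \<times> {q. g q \<noteq> 0})"
      by (intro image_eqI) auto
  qed
  moreover have "finite ({p. f p \<noteq> 0} \<times> {q. g q \<noteq> 0})" using f g by (simp add: kH_def)
  ultimately have "finite {r. pmult Q f g r \<noteq> 0}" by (meson finite_imageI finite_subset)
  then show ?thesis unfolding kH_def using pm_nz by blast
qed

lemma pm_padd_left: "pmult Q (padd f g) h = padd (pmult Q f h) (pmult Q g h)"
  by (rule ext) (simp add: pmult_def distrib_right sum.distrib)
lemma pm_padd_right: "pmult Q f (padd g h) = padd (pmult Q f g) (pmult Q f h)"
  by (rule ext) (simp add: pmult_def distrib_left sum.distrib)
lemma pm_psub_left: "pmult Q (psub f g) h = psub (pmult Q f h) (pmult Q g h)"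
  by (rule ext) (simp add: pmult_def left_diff_distrib sum_subtractf)
lemma pm_psub_right: "pmult Q f (psub g h) = psub (pmult Q f g) (pmult Q f h)"
  by (rule ext) (simp add: pmult_def right_diff_distrib sum_subtractf)
lemma pm_smul_left: "pmult Q (smul c f) h = smul c (pmult Q f h)"
  by (rule ext) (simp add: pmult_def sum_distrib_left mult.assoc)
lemma pm_smul_right: "pmult Q f (smul c h) = smul c (pmult Q f h)"
  by (rule ext) (simp add: pmult_def sum_distrib_left mult.left_commute)
lemma pm_zero_left[simp]: "pmult Q pzero h = pzero"
  by (rule ext) (simp add: pmult_def)
lemma pm_zero_right[simp]: "pmult Q f pzero = pzero"
  by (rule ext) (simp add: pmult_def)


locale qwf =
  fixes Q :: "('v,'e) quiver"
  assumes fv: "finite (verts Q)"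
    and wf: "\<forall>a\<in>arrs Q. src Q a \<in> verts Q \<and> tgt Q a \<in> verts Q"
begin

lemmas vCons = valid_Cons[OF wf]
lemmas vtake = valid_take[OF wf]
lemmas vdrop = valid_drop[OF wf]
lemmas vend = valid_path_end[OF wf]

lemma one_kH': "one Q \<in> kH Q" using one_kH[OF fv] .

lemma pm_valid_sum: "valid_path Q r \<Longrightarrow> pmult Q f g r = (\<Sum>i\<in>{0..length (snd r)}.
          f (path_end Q (fst r, take i (snd r)), drop i (snd r)) * g (fst r, take i (snd r)))"
  by (simp add: pmult_def)

lemma pm_invalid: "\<not> valid_path Q r \<Longrightarrow> pmult Q f g r = 0"
  by (simp add: pmult_def)

lemma kH_invalid: "f \<in> kH Q \<Longrightarrow> \<not> valid_path Q r \<Longrightarrow> f r = 0"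
  using kH_valid by blast

lemma pm_one_left:
  assumes g: "g \<in> kH Q"
  shows "pmult Q (one Q) g = g"
proof (rule ext)
  fix r :: "('v,'e) path"
  obtain x xs where r: "r = (x, xs)" by (cases r)
  show "pmult Q (one Q) g r = g r"
  proof (cases "valid_path Q r")
    case False then show ?thesis using g by (simp add: pm_invalid kH_invalid)
  next
    case True
    have "pmult Q (one Q) g r = (\<Sum>i\<in>{0..length xs}. (if i = length xs then g r else 0))"
      unfolding r pm_valid_sum[OF True[unfolded r]] fst_conv snd_conv
    proof (rule sum.cong[OF refl])
      fix i assume i: "i \<in> {0..length xs}"
      show "one Q (path_end Q (x, take i xs), drop i xs) * g (x, take i xs) =
             (if i = length xs then g (x, xs) else 0)"
      proof (cases "i = length xs")
        case True
        have "valid_path Q (x, xs)" using \<open>valid_path Q r\<close> r by simp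
        then have "path_end Q (x, xs) \<in> verts Q" by (rule vend)
        then show ?thesis using True by (simp add: one_def)
      next
        case False
        then have "drop i xs \<noteq> []" using i by auto
        then show ?thesis using False by (simp add: one_def)
      qed
    qed
    also have "\<dots> = g r" by simp
    finally show ?thesis .
  qed
qed

lemma pm_one_right:
  assumes f: "f \<in> kH Q"
  shows "pmult Q f (one Q) = f"
proof (rule ext)
  fix r :: "('v,'e) path"
  obtain x xs where r: "r = (x, xs)" by (cases r)
  show "pmult Q f (one Q) r = f r"
  proof (cases "valid_path Q r")
    case False then show ?thesis using f by (simp add: pm_invalid kH_invalid)
  next
    case True
    then have xv: "x \<in> verts Q" using r by (cases xs) (auto simp: vCons)
    have "pmult Q f (one Q) r = (\<Sum>i\<in>{0..length xs}. (if i = 0 then f r else 0))"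
      unfolding r pm_valid_sum[OF True[unfolded r]] fst_conv snd_conv
    proof (rule sum.cong[OF refl])
      fix i assume i: "i \<in> {0..length xs}"
      show "f (path_end Q (x, take i xs), drop i xs) * one Q (x, take i xs) =
             (if i = 0 then f (x, xs) else 0)"
      proof (cases "i = 0")
        case True
        then show ?thesis using xv by (simp add: one_def)
      next
        case False
        show ?thesis
        proof (cases "xs = []")
          case True then show ?thesis using i False by simp
        next
          case False2: False
          then have "take i xs \<noteq> []" using False by simp
          then show ?thesis using False by (simp add: one_def)
        qed
      qed
    qed
    also have "\<dots> = f r" by simp
    finally show ?thesis .
  qed
qed

lemma take_eq_len:
  assumes "i \<le> length xs" "take i xs = ys" shows "i = length ys"
  using assms by auto

lemma pbasis_mult: "(pbasis p a * pbasis q b :: 'k::field) = (if a = p \<and> b = q then 1 else 0)"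
  by (simp add: pbasis_apply)

lemma pm_pbasis:
  "pmult Q (pbasis p) (pbasis q) =
     (if path_end Q q = fst p \<and> valid_path Q (fst q, snd q @ snd p)
      then pbasis (fst q, snd q @ snd p) else pzero)"
proof (rule ext)
  fix r :: "('v,'e) path"
  obtain x xs where r: "r = (x, xs)" by (cases r)
  let ?C = "path_end Q q = fst p \<and> r = (fst q, snd q @ snd p)"
  have key: "(pmult Q (pbasis p) (pbasis q) r :: 'k::field) = (if valid_path Q r \<and> ?C then 1 else 0)"
  proof (cases "valid_path Q r")
    case False then show ?thesis by (simp add: pm_invalid)
  next
    case True
    have "pmult Q (pbasis p) (pbasis q) r =
        (\<Sum>i\<in>{0..length xs}. (if i = length (snd q) \<and> ?C then (1::'k) else 0))"
      unfolding r pm_valid_sum[OF True[unfolded r]] fst_conv snd_conv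
    proof (rule sum.cong[OF refl])
      fix i assume i: "i \<in> {0..length xs}"
      have E: "((path_end Q (x, take i xs), drop i xs) = p \<and> (x, take i xs) = q) \<longleftrightarrow>
             (i = length (snd q) \<and> path_end Q q = fst p \<and> (x, xs) = (fst q, snd q @ snd p))"
      proof
        assume H: "(path_end Q (x, take i xs), drop i xs) = p \<and> (x, take i xs) = q"
        then have "i = length (snd q)" using i by auto
        moreover have "xs = snd q @ snd p" using H by (metis append_take_drop_id snd_conv)
        ultimately show "i = length (snd q) \<and> path_end Q q = fst p \<and> (x, xs) = (fst q, snd q @ snd p)"
          using H by (cases p; cases q) auto
      next
        assume H: "i = length (snd q) \<and> path_end Q q = fst p \<and> (x, xs) = (fst q, snd q @ snd p)"
        then have "take i xs = snd q" "drop i xs = snd p" by auto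
        then show "(path_end Q (x, take i xs), drop i xs) = p \<and> (x, take i xs) = q"
          using H by (metis prod.collapse fst_conv)
      qed
      then show "pbasis p (path_end Q (x, take i xs), drop i xs) * pbasis q (x, take i xs) =
          (if i = length (snd q) \<and> path_end Q q = fst p \<and> (x, xs) = (fst q, snd q @ snd p) then 1 else 0)"
        unfolding pbasis_mult E by simp
    qed
    also have "\<dots> = (if ?C then 1 else 0)"
    proof (cases ?C)
      case True
      then have "length (snd q) \<in> {0..length xs}" using r by auto
      then show ?thesis using True by (simp add: sum.delta)
    next
      case False
      have Z: "(\<Sum>i\<in>{0..length xs}. (if i = length (snd q) \<and> ?C then (1::'k) else 0)) = 0"
        using False by (intro sum.neutral ballI if_not_P) blast
      show ?thesis unfolding if_not_P[OF False] by (rule Z)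
    qed
    finally show ?thesis using True by simp
  qed
  show "pmult Q (pbasis p) (pbasis q) r =
     (if path_end Q q = fst p \<and> valid_path Q (fst q, snd q @ snd p)
      then pbasis (fst q, snd q @ snd p) else pzero) r"
    unfolding key by (auto simp: pbasis_apply)
qed

lemma pm_idem_right:
  assumes h: "h \<in> kH Q" and d: "dsupp x h"
  shows "pmult Q h (idem x) = h"
proof (rule ext)
  fix r :: "('v,'e) path"
  obtain y xs where r: "r = (y, xs)" by (cases r)
  show "pmult Q h (idem x) r = h r"
  proof (cases "valid_path Q r")
    case False then show ?thesis using h by (simp add: pm_invalid kH_invalid)
  next
    case True
    have "pmult Q h (idem x) r = (\<Sum>i\<in>{0..length xs}. (if i = 0 \<and> y = x then h r else 0))"
      unfolding r pm_valid_sum[OF True[unfolded r]] fst_conv snd_conv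
    proof (rule sum.cong[OF refl])
      fix i assume i: "i \<in> {0..length xs}"
      show "h (path_end Q (y, take i xs), drop i xs) * idem x (y, take i xs) =
             (if i = 0 \<and> y = x then h (y, xs) else 0)"
      proof (cases "i = 0")
        case True
        then show ?thesis by (simp add: idem_def pbasis_apply)
      next
        case False
        show ?thesis
        proof (cases "xs = []")
          case True then show ?thesis using i False by simp
        next
          case False2: False
          then have "take i xs \<noteq> []" using False by simp
          then show ?thesis using False by (simp add: idem_def pbasis_apply)
        qed
      qed
    qed
    also have "\<dots> = (if y = x then h r else 0)" by (simp add: sum.delta)
    also have "\<dots> = h r"
    proof (cases "y = x")
      case False
      then have "h r = 0" using d r unfolding dsupp_def by force
      then show ?thesis using False by simp
    qed simp
    finally show ?thesis .
  qed
qed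

end


context qwf begin
lemma pm_short0: "pmult Q f g (x, []) = (if x \<in> verts Q then f (x, []) * g (x, []) else 0)"
  by (simp add: pmult_def)

lemma pm_short1: "pmult Q f g (x, [a]) =
   (if valid_path Q (x, [a]) then f (x, [a]) * g (x, []) + f (tgt Q a, []) * g (x, [a]) else 0)"
proof (cases "valid_path Q (x, [a])")
  case True
  have "{0..length [a]} = {0, 1::nat}" by auto
  then show ?thesis using True by (simp add: pmult_def path_end_def)
next
  case False then show ?thesis by (simp add: pmult_def)
qed

lemma dsupp_pm: "dsupp x g \<Longrightarrow> dsupp x (pmult Q f g)"
  unfolding dsupp_def using pm_nz by fastforce

lemma lsupp_pm: "lsupp a f \<Longrightarrow> lsupp b g \<Longrightarrow> lsupp (a + b) (pmult Q f g)"
  unfolding lsupp_def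
proof (intro allI impI)
  fix r assume f: "\<forall>r. f r \<noteq> 0 \<longrightarrow> a \<le> length (snd r)" and g: "\<forall>r. g r \<noteq> 0 \<longrightarrow> b \<le> length (snd r)"
    and nz: "pmult Q f g r \<noteq> 0"
  then obtain i where i: "i \<le> length (snd r)" "f (path_end Q (fst r, take i (snd r)), drop i (snd r)) \<noteq> 0"
        "g (fst r, take i (snd r)) \<noteq> 0" using pm_nz by blast
  then have "a \<le> length (drop i (snd r))" "b \<le> length (take i (snd r))"
    using f g by fastforce+
  then show "a + b \<le> length (snd r)" using i by simp
qed

lemma lsupp0: "lsupp 0 f" by (simp add: lsupp_def)


end


context qwf begin
lemma pm_arr_right:
  fixes h :: "('v,'e,'k::field) elem"
  assumes a: "a \<in> arrs Q"
  shows "pmult Q h (arr Q a) r = (if valid_path Q r \<and> fst r = src Q a \<and> snd r \<noteq> [] \<and> hd (snd r) = a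
     then h (tgt Q a, tl (snd r)) else 0)"
proof (cases "valid_path Q r")
  case False then show ?thesis by (simp add: pm_invalid)
next
  case True
  obtain x xs where r: "r = (x, xs)" by (cases r)
  let ?C = "x = src Q a \<and> xs \<noteq> [] \<and> hd xs = a"
  have "pmult Q h (arr Q a) r = (\<Sum>i\<in>{0..length xs}. (if i = 1 \<and> ?C then h (tgt Q a, tl xs) else 0))"
    unfolding r pm_valid_sum[OF True[unfolded r]] fst_conv snd_conv
  proof (rule sum.cong[OF refl])
    fix i assume i: "i \<in> {0..length xs}"
    have E: "(x, take i xs) = (src Q a, [a]) \<longleftrightarrow> i = 1 \<and> ?C"
    proof
      assume H: "(x, take i xs) = (src Q a, [a])"
      then have "length (take i xs) = 1" by simp
      then have "i = 1" using i by simp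
      then show "i = 1 \<and> ?C" using H by (cases xs) auto
    next
      assume "i = 1 \<and> ?C" then show "(x, take i xs) = (src Q a, [a])" by (cases xs) auto
    qed
    show "h (path_end Q (x, take i xs), drop i xs) * arr Q a (x, take i xs) =
        (if i = 1 \<and> ?C then h (tgt Q a, tl xs) else 0)"
    proof (cases "i = 1 \<and> ?C")
      case True
      then have "(path_end Q (x, take i xs), drop i xs) = (tgt Q a, tl xs)"
        by (cases xs) auto
      moreover have "arr Q a (x, take i xs) = (1::'k)" using E True by (simp add: arr_def pbasis_apply)
      ultimately show ?thesis using True by simp
    next
      case False
      then have "arr Q a (x, take i xs) = (0::'k)" using E by (simp add: arr_def pbasis_apply)
      then show ?thesis unfolding if_not_P[OF False] by simp
    qed
  qed
  also have "\<dots> = (if ?C then h (tgt Q a, tl xs) else 0)"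
  proof (cases ?C)
    case True then have "1 \<in> {0..length xs}" by (cases xs) auto
    then show ?thesis using True by (simp add: sum.delta)
  next
    case False
    show ?thesis unfolding if_not_P[OF False]
      using False by (intro sum.neutral ballI if_not_P) blast
  qed
  finally show ?thesis using True r by simp
qed


end


context qwf begin
lemma pm_assoc_arr:
  fixes u x :: "('v,'e,'k::field) elem"
  assumes a: "a \<in> arrs Q"
  shows "pmult Q (pmult Q u x) (arr Q a) = pmult Q u (pmult Q x (arr Q a))"
proof (rule ext)
  fix r :: "('v,'e) path"
  obtain y xs where r: "r = (y, xs)" by (cases r)
  show "pmult Q (pmult Q u x) (arr Q a) r = pmult Q u (pmult Q x (arr Q a)) r"
  proof (cases "valid_path Q r \<and> y = src Q a \<and> xs \<noteq> [] \<and> hd xs = a")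
    case False
    show ?thesis
    proof (cases "valid_path Q r")
      case False then show ?thesis by (simp add: pm_invalid)
    next
      case True
      have "pmult Q u (pmult Q x (arr Q a)) r = 0"
        unfolding pm_valid_sum[OF True]
      proof (rule sum.neutral, rule ballI)
        fix i assume "i \<in> {0..length (snd r)}"
        have "pmult Q x (arr Q a) (fst r, take i (snd r)) = 0"
          using False True r by (cases xs; cases i) (auto simp: pm_arr_right[OF a])
        then show "u (path_end Q (fst r, take i (snd r)), drop i (snd r)) *
            pmult Q x (arr Q a) (fst r, take i (snd r)) = 0" by simp
      qed
      moreover have "pmult Q (pmult Q u x) (arr Q a) r = 0"
        unfolding pm_arr_right[OF a] r fst_conv snd_conv using False[unfolded r] by (rule if_not_P)
      ultimately show ?thesis by simp
    qed
  next
    case True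
    then have V: "valid_path Q r" and Y: "y = src Q a" and NE: "xs \<noteq> []" and H: "hd xs = a"
      using r by auto
    obtain ys where xs: "xs = a # ys" using NE H by (cases xs) auto
    have vr: "valid_path Q (y, a # ys)" using V unfolding r xs .
    then have vt: "valid_path Q (tgt Q a, ys)" by (simp add: vCons)
    have L: "pmult Q (pmult Q u x) (arr Q a) r = pmult Q u x (tgt Q a, ys)"
      unfolding pm_arr_right[OF a] r xs fst_conv snd_conv by (subst if_P) (use vr Y in auto)
    also have "\<dots> = (\<Sum>j\<in>{0..length ys}. u (path_end Q (tgt Q a, take j ys), drop j ys) * x (tgt Q a, take j ys))"
      using pm_valid_sum[OF vt] by simp
    also have "\<dots> = (\<Sum>i\<in>{0..length xs}. u (path_end Q (y, take i xs), drop i xs) *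
            pmult Q x (arr Q a) (y, take i xs))"
    proof -
      have "(\<Sum>i\<in>{0..length xs}. u (path_end Q (y, take i xs), drop i xs) * pmult Q x (arr Q a) (y, take i xs))
        = (\<Sum>i\<in>{0..Suc (length ys)}. u (path_end Q (y, take i (a # ys)), drop i (a # ys)) * pmult Q x (arr Q a) (y, take i (a # ys)))"
        using xs by simp
      also have "\<dots> = u (path_end Q (y, []), a # ys) * pmult Q x (arr Q a) (y, []) +
          (\<Sum>j\<in>{0..length ys}. u (path_end Q (y, take (Suc j) (a # ys)), drop (Suc j) (a # ys)) *
              pmult Q x (arr Q a) (y, take (Suc j) (a # ys)))"
        by (subst sum.atLeast0_atMost_Suc_shift) simp
      also have "\<dots> = (\<Sum>j\<in>{0..length ys}. u (path_end Q (tgt Q a, take j ys), drop j ys) * x (tgt Q a, take j ys))"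
      proof -
        have "pmult Q x (arr Q a) (y, []) = 0" by (simp add: pm_arr_right[OF a])
        moreover have "\<And>j. pmult Q x (arr Q a) (y, take (Suc j) (a # ys)) = x (tgt Q a, take j ys)"
        proof -
          fix j
          have vj: "valid_path Q (y, take (Suc j) (a # ys))" using vtake[OF vr] by blast
          show "pmult Q x (arr Q a) (y, take (Suc j) (a # ys)) = x (tgt Q a, take j ys)"
            unfolding pm_arr_right[OF a] fst_conv snd_conv
            by (subst if_P) (use vj Y in auto)
        qed
        ultimately show ?thesis by simp
      qed
      finally show ?thesis by simp
    qed
    also have "\<dots> = pmult Q u (pmult Q x (arr Q a)) r"
      unfolding r pm_valid_sum[OF V[unfolded r]] fst_conv snd_conv ..
    finally show ?thesis .
  qed
qed

end


context qwf begin

lemma arr_kH: "a \<in> arrs Q \<Longrightarrow> arr Q a \<in> kH Q"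
  unfolding arr_def using wf by (intro pbasis_kH) (simp add: vCons)

lemma idem_kH: "x \<in> verts Q \<Longrightarrow> idem x \<in> kH Q"
  unfolding idem_def by (intro pbasis_kH) simp

lemma ideal_kH: "X \<subseteq> kH Q \<Longrightarrow> ideal_gen Q X \<subseteq> kH Q"
proof
  fix x assume X: "X \<subseteq> kH Q" and xi: "x \<in> ideal_gen Q X"
  from xi show "x \<in> kH Q"
  proof (induction rule: ideal_gen.induct)
    case (gen x) then show ?case using X by blast
  qed (blast intro: padd_kH pm_kH pzero_kH)+
qed

lemma pm_smul_one: "f \<in> kH Q \<Longrightarrow> pmult Q (smul c (one Q)) f = smul c f"
  by (simp add: pm_smul_left pm_one_left)

lemma ideal_lmul:
  assumes X: "X \<subseteq> kH Q" and x: "x \<in> ideal_gen Q X" and u: "u \<in> kH Q"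
  shows "pmult Q u x \<in> ideal_gen Q X"
proof -
  have xk: "x \<in> kH Q" using ideal_kH[OF X] x by blast
  have "pmult Q u (pmult Q x (one Q)) \<in> ideal_gen Q X"
    by (rule ideal_gen.mult[OF x u one_kH'])
  then show ?thesis using pm_one_right[OF xk] by simp
qed

lemma ideal_rmul:
  assumes X: "X \<subseteq> kH Q" and x: "x \<in> ideal_gen Q X" and w: "w \<in> kH Q"
  shows "pmult Q x w \<in> ideal_gen Q X"
proof -
  have xk: "x \<in> kH Q" using ideal_kH[OF X] x by blast
  have "pmult Q (one Q) (pmult Q x w) \<in> ideal_gen Q X"
    by (rule ideal_gen.mult[OF x one_kH' w])
  then show ?thesis using pm_one_left[OF pm_kH[OF xk w]] by simp
qed

lemma ideal_smul:
  assumes X: "X \<subseteq> kH Q" and x: "x \<in> ideal_gen Q X"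
  shows "smul c x \<in> ideal_gen Q X"
proof -
  have xk: "x \<in> kH Q" using ideal_kH[OF X] x by blast
  have "pmult Q (smul c (one Q)) x \<in> ideal_gen Q X"
    by (rule ideal_lmul[OF X x smul_kH[OF one_kH']])
  then show ?thesis using pm_smul_one[OF xk] by simp
qed

lemma ideal_padd: "a \<in> ideal_gen Q X \<Longrightarrow> b \<in> ideal_gen Q X \<Longrightarrow> padd a b \<in> ideal_gen Q X"
  by (rule ideal_gen.add)

lemma ideal_psub:
  assumes X: "X \<subseteq> kH Q" and a: "a \<in> ideal_gen Q X" and b: "b \<in> ideal_gen Q X"
  shows "psub a b \<in> ideal_gen Q X"
proof -
  have "padd a (smul (-1) b) \<in> ideal_gen Q X"
    by (rule ideal_gen.add[OF a ideal_smul[OF X b]])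
  moreover have "padd a (smul (-1) b) = psub a b" by (rule ext) simp
  ultimately show ?thesis by simp
qed

lemma ideal_sum:
  assumes X: "X \<subseteq> kH Q" and F: "finite F"
  shows "(\<forall>p\<in>F. g p \<in> ideal_gen Q X) \<Longrightarrow> (\<lambda>r. \<Sum>p\<in>F. g p r) \<in> ideal_gen Q X"
  using F
proof (induction F rule: finite_induct)
  case empty
  have "(\<lambda>r. \<Sum>p\<in>{}. g p r) = pzero" by (rule ext) simp
  then show ?case using ideal_gen.zero by simp
next
  case (insert a F)
  have "(\<lambda>r. \<Sum>p\<in>insert a F. g p r) = padd (g a) (\<lambda>r. \<Sum>p\<in>F. g p r)"
    by (rule ext) (simp add: insert.hyps)
  then show ?case using insert by (auto intro: ideal_gen.add)
qed

lemma lsupp_padd: "lsupp n f \<Longrightarrow> lsupp n g \<Longrightarrow> lsupp n (padd f g)"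
  unfolding lsupp_def by (metis add.right_neutral padd_apply)

lemma lsupp_zero: "lsupp n pzero" by (simp add: lsupp_def)

lemma ideal_lsupp:
  assumes "X \<subseteq> {f \<in> kH Q. lsupp n f}"
  shows "ideal_gen Q X \<subseteq> {f \<in> kH Q. lsupp n f}"
proof
  fix x assume "x \<in> ideal_gen Q X"
  then show "x \<in> {f \<in> kH Q. lsupp n f}"
  proof (induction rule: ideal_gen.induct)
    case (gen x) then show ?case using assms by blast
  next
    case zero then show ?case using lsupp_zero pzero_kH by blast
  next
    case (add a b) then show ?case by (blast intro: padd_kH lsupp_padd)
  next
    case (mult a u w)
    have "lsupp (0 + (n + 0)) (pmult Q u (pmult Q a w))"
      using mult by (intro lsupp_pm lsupp0) auto
    then show ?case using mult by (auto intro: pm_kH)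
  qed
qed

lemma arrow_ideal_kH: "arrow_ideal Q \<subseteq> {f \<in> kH Q. lsupp 1 f}"
  unfolding arrow_ideal_def
proof (rule ideal_lsupp, safe)
  fix a assume "a \<in> arrs Q"
  then show "arr Q a \<in> kH Q" by (rule arr_kH)
  show "lsupp 1 (arr Q a)" by (simp add: lsupp_def arr_def pbasis_apply)
qed

lemma pow_kH_lsupp: "ideal_pow Q (arrow_ideal Q) n \<subseteq> {f :: ('v,'e,'k::field) elem. f \<in> kH Q \<and> lsupp n f}"
proof (induction n)
  case 0 then show ?case by (auto simp: lsupp0)
next
  case (Suc n)
  show ?case unfolding ideal_pow.simps
  proof (rule ideal_lsupp, safe)
    fix x y :: "('v,'e,'k) elem"
    assume x: "x \<in> ideal_pow Q (arrow_ideal Q) n" and y: "y \<in> arrow_ideal Q"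
    have xx1: "x \<in> kH Q" using x Suc by blast
    have xx2: "lsupp n x" using x Suc by blast
    note xx = xx1 xx2
    have yy: "y \<in> kH Q" "lsupp 1 y" using y arrow_ideal_kH by blast+
    show "pmult Q x y \<in> kH Q" using xx yy by (rule_tac pm_kH) auto
    have "lsupp (n + 1) (pmult Q x y)" using xx yy by (intro lsupp_pm) auto
    then show "lsupp (Suc n) (pmult Q x y)" by simp
  qed
qed

lemma pow_gen_kH: "{pmult Q x y | x y. x \<in> ideal_pow Q (arrow_ideal Q) n \<and> y \<in> arrow_ideal Q} \<subseteq> kH Q"
  using pow_kH_lsupp arrow_ideal_kH by (blast intro: pm_kH)

lemma pbasis_pow:
  "valid_path Q p \<Longrightarrow> n \<le> length (snd p) \<Longrightarrow> (pbasis p :: ('v,'e,'k::field) elem) \<in> ideal_pow Q (arrow_ideal Q) n"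
proof (induction n arbitrary: p)
  case 0 then show ?case by (simp add: pbasis_kH)
next
  case (Suc n)
  obtain x xs where p: "p = (x, xs)" by (cases p)
  then obtain a ys where xs: "xs = a # ys" using Suc.prems by (cases xs) auto
  have v: "x \<in> verts Q" "a \<in> arrs Q" "src Q a = x" "valid_path Q (tgt Q a, ys)"
    using Suc.prems p xs by (auto simp: vCons)
  have IH: "(pbasis (tgt Q a, ys) :: ('v,'e,'k) elem) \<in> ideal_pow Q (arrow_ideal Q) n"
    using Suc.IH[OF v(4)] Suc.prems p xs by simp
  have J: "(arr Q a :: ('v,'e,'k) elem) \<in> arrow_ideal Q" unfolding arrow_ideal_def using v(2) by (blast intro: ideal_gen.gen)
  have eq: "pmult Q (pbasis (tgt Q a, ys)) (arr Q a) = (pbasis p :: ('v,'e,'k) elem)"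
    unfolding arr_def pm_pbasis using v Suc.prems p xs by simp
  then have "(pbasis p :: ('v,'e,'k) elem) \<in> {pmult Q x y |x y. x \<in> ideal_pow Q (arrow_ideal Q) n \<and> y \<in> arrow_ideal Q}"
    using IH J eq[symmetric] by blast
  then show ?case by (simp only: ideal_pow.simps) (rule ideal_gen.gen)
qed

lemma lsupp_pow:
  fixes f :: "('v,'e,'k::field) elem"
  assumes n: "1 \<le> n" and f: "f \<in> kH Q" and l: "lsupp n f"
  shows "f \<in> ideal_pow Q (arrow_ideal Q) n"
proof -
  obtain k where k: "n = Suc k" using n by (cases n) auto
  let ?X = "{pmult Q x y | x y. x \<in> (ideal_pow Q (arrow_ideal Q) k :: ('v,'e,'k) elem set) \<and> y \<in> arrow_ideal Q}"
  have pw: "ideal_pow Q (arrow_ideal Q) n = ideal_gen Q ?X" using k by simp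
  let ?F = "{p. f p \<noteq> 0}"
  have F: "finite ?F" using f by (simp add: kH_def)
  have "(\<lambda>r. \<Sum>p\<in>?F. smul (f p) (pbasis p) r) \<in> ideal_gen Q ?X"
  proof (rule ideal_sum[OF pow_gen_kH F], rule ballI)
    fix p assume "p \<in> ?F"
    then have "valid_path Q p" "n \<le> length (snd p)" using f l kH_valid unfolding lsupp_def by blast+
    then have "(pbasis p :: ('v,'e,'k) elem) \<in> ideal_pow Q (arrow_ideal Q) n" by (rule pbasis_pow)
    then have "(pbasis p :: ('v,'e,'k) elem) \<in> ideal_gen Q ?X" using pw by simp
    then show "smul (f p) (pbasis p) \<in> ideal_gen Q ?X" by (rule ideal_smul[OF pow_gen_kH])
  qed
  moreover have "(\<lambda>r. \<Sum>p\<in>?F. smul (f p) (pbasis p) r) = f"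
  proof (rule ext)
    fix r
    have "(\<Sum>p\<in>?F. smul (f p) (pbasis p) r) = (\<Sum>p\<in>?F. if r = p then f p else 0)"
      by (rule sum.cong) (auto simp: pbasis_apply)
    also have "\<dots> = f r" using F by (simp add: sum.delta)
    finally show "(\<Sum>p\<in>?F. smul (f p) (pbasis p) r) = f r" .
  qed
  ultimately show ?thesis using pw by simp
qed

end


definition tsub :: "('v,'e) quiver \<Rightarrow> ('v,'e,'k::field) elem set \<Rightarrow> bool" where
  "tsub Q T \<longleftrightarrow> T \<subseteq> kH Q \<and> pzero \<in> T \<and> (\<forall>x\<in>T. \<forall>y\<in>T. padd x y \<in> T)
     \<and> (\<forall>u\<in>kH Q. \<forall>x\<in>T. pmult Q u x \<in> T)"

lemma emb_0[simp]: "emb f 0 = f" by (simp add: emb_def)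
lemma emb_inj: "inj emb" by (metis emb_0 injI)
lemma emb_eq_iff[simp]: "emb x = emb y \<longleftrightarrow> x = y" by (metis emb_0)
lemma emb_in_image[simp]: "emb x \<in> emb ` T \<longleftrightarrow> x \<in> T"
proof
  assume "emb x \<in> emb ` T"
  then obtain y where "y \<in> T" "emb x = emb y" by blast
  then show "x \<in> T" by simp
qed simp
lemma emb_image_subset[simp]: "emb ` A \<subseteq> emb ` B \<longleftrightarrow> A \<subseteq> B"
  by (auto simp: image_subset_iff)
lemma emb_image_eq[simp]: "emb ` A = emb ` B \<longleftrightarrow> A = B"
  by (simp only: set_eq_subset emb_image_subset)
lemma emb_apply: "emb f i = (if i = 0 then f else pzero)" by (simp add: emb_def)
lemma emb_zero: "emb pzero = vzero" by (rule ext) (simp add: emb_def vzero_def)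
lemma vadd_emb: "vadd (emb x) (emb y) = emb (padd x y)"
  by (rule ext) (auto simp: emb_def vadd_def padd_def pzero_def)
lemma vsub_emb: "vsub (emb x) (emb y) = emb (psub x y)"
  by (rule ext) (auto simp: emb_def vsub_def psub_def pzero_def)
lemma vact_emb: "vact Q u (emb x) = emb (pmult Q u x)"
  by (rule ext) (auto simp: emb_def vact_def)

lemma tsub_submod:
  fixes T :: "('v,'e,'k::field) elem set"
  shows "tsub Q T \<Longrightarrow> submod Q (emb ` T)"
  unfolding tsub_def submod_def
proof (elim conjE, intro conjI ballI allI)
  assume T: "T \<subseteq> kH Q" "pzero \<in> T" "\<forall>x\<in>T. \<forall>y\<in>T. padd x y \<in> T" "\<forall>u\<in>kH Q. \<forall>x\<in>T. pmult Q u x \<in> T"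
  show "vzero \<in> emb ` T" using T(2) emb_zero by (metis imageI)
  fix v :: "('v,'e,'k) vec" and i assume "v \<in> emb ` T"
  then show "v i \<in> kH Q" using T(1) by (auto simp: emb_apply)
next
  fix v w :: "('v,'e,'k) vec" assume T: "T \<subseteq> kH Q" "pzero \<in> T" "\<forall>x\<in>T. \<forall>y\<in>T. padd x y \<in> T" "\<forall>u\<in>kH Q. \<forall>x\<in>T. pmult Q u x \<in> T"
    and "v \<in> emb ` T" "w \<in> emb ` T"
  then show "vadd v w \<in> emb ` T" by (auto simp: vadd_emb)
next
  fix u :: "('v,'e,'k) elem" and v :: "('v,'e,'k) vec" assume T: "T \<subseteq> kH Q" "pzero \<in> T" "\<forall>x\<in>T. \<forall>y\<in>T. padd x y \<in> T" "\<forall>u\<in>kH Q. \<forall>x\<in>T. pmult Q u x \<in> T"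
    and "u \<in> kH Q" "v \<in> emb ` T"
  then show "vact Q u v \<in> emb ` T" by (auto simp: vact_emb)
qed

lemma submod_tsub:
  fixes N :: "('v,'e,'k::field) vec set"
  shows "submod Q N \<Longrightarrow> tsub Q {x. emb x \<in> N}"
  unfolding tsub_def submod_def
proof (elim conjE, intro conjI ballI subsetI)
  assume N: "\<forall>v\<in>N. \<forall>i. v i \<in> kH Q" "vzero \<in> N" "\<forall>v\<in>N. \<forall>w\<in>N. vadd v w \<in> N"
    "\<forall>u\<in>kH Q. \<forall>v\<in>N. vact Q u v \<in> N"
  show "pzero \<in> {x. emb x \<in> N}" using N(2) by (simp add: emb_zero)
  fix x :: "('v,'e,'k) elem" assume "x \<in> {x. emb x \<in> N}"
  then show "x \<in> kH Q" using N(1) emb_0 by (metis mem_Collect_eq)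
next
  fix x y :: "('v,'e,'k) elem" assume N: "\<forall>v\<in>N. \<forall>i. v i \<in> kH Q" "vzero \<in> N" "\<forall>v\<in>N. \<forall>w\<in>N. vadd v w \<in> N"
    "\<forall>u\<in>kH Q. \<forall>v\<in>N. vact Q u v \<in> N" and "x \<in> {x. emb x \<in> N}" "y \<in> {x. emb x \<in> N}"
  then show "padd x y \<in> {x. emb x \<in> N}" by (simp add: vadd_emb[symmetric])
next
  fix u x :: "('v,'e,'k) elem" assume N: "\<forall>v\<in>N. \<forall>i. v i \<in> kH Q" "vzero \<in> N" "\<forall>v\<in>N. \<forall>w\<in>N. vadd v w \<in> N"
    "\<forall>u\<in>kH Q. \<forall>v\<in>N. vact Q u v \<in> N" and "u \<in> kH Q" "x \<in> {x. emb x \<in> N}"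
  then show "pmult Q u x \<in> {x. emb x \<in> N}" by (simp add: vact_emb[symmetric])
qed

lemma image_emb_T: "N \<subseteq> range emb \<Longrightarrow> N = emb ` {x. emb x \<in> N}"
  by auto


context qwf begin

lemma tsub_smul: "tsub Q T \<Longrightarrow> x \<in> T \<Longrightarrow> smul c x \<in> T"
  unfolding tsub_def using pm_smul_one smul_kH one_kH' by (metis subsetD)

lemma tsub_psub: "tsub Q T \<Longrightarrow> x \<in> T \<Longrightarrow> y \<in> T \<Longrightarrow> psub x y \<in> T"
proof -
  assume T: "tsub Q T" and x: "x \<in> T" and y: "y \<in> T"
  have "padd x (smul (-1) y) \<in> T" using T x tsub_smul[OF T y] unfolding tsub_def by blast
  moreover have "padd x (smul (-1) y) = psub x y" by (rule ext) simp
  ultimately show ?thesis by simp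
qed

lemma tsub_padd: "tsub Q T \<Longrightarrow> x \<in> T \<Longrightarrow> y \<in> T \<Longrightarrow> padd x y \<in> T"
  unfolding tsub_def by blast

lemma tsub_pm: "tsub Q T \<Longrightarrow> u \<in> kH Q \<Longrightarrow> x \<in> T \<Longrightarrow> pmult Q u x \<in> T"
  unfolding tsub_def by blast

lemma tsub_kH: "tsub Q T \<Longrightarrow> x \<in> T \<Longrightarrow> x \<in> kH Q"
  unfolding tsub_def by blast

lemma tsub_zero: "tsub Q T \<Longrightarrow> pzero \<in> T"
  unfolding tsub_def by blast

end


locale qset = qwf Q for Q :: "('v,'e) quiver" +
  fixes sig :: "('v,'e,'k::field) elem set" and m :: nat
  assumes fa: "finite (arrs Q)"
    and sigkH: "sig \<subseteq> kH Q" and m1: "1 \<le> m"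
    and powm: "ideal_pow Q (arrow_ideal Q) m \<subseteq> ideal_gen Q sig"
    and I2: "ideal_gen Q sig \<subseteq> ideal_pow Q (arrow_ideal Q) 2"
begin

abbreviation Iq :: "('v,'e,'k) elem set" where "Iq \<equiv> ideal_gen Q sig"

lemma Iq_kH: "x \<in> Iq \<Longrightarrow> x \<in> kH Q" using ideal_kH[OF sigkH] by blast
lemma Iq_lsupp: "x \<in> Iq \<Longrightarrow> lsupp 2 x" using I2 pow_kH_lsupp by blast
lemma lsupp_short: "lsupp n x \<Longrightarrow> length (snd r) < n \<Longrightarrow> x r = 0"
  unfolding lsupp_def by (meson not_le)
lemma Iq_0: "x \<in> Iq \<Longrightarrow> x (y, []) = 0"
  by (rule lsupp_short[OF Iq_lsupp]) simp_all
lemma Iq_1: "x \<in> Iq \<Longrightarrow> x (y, [a]) = 0"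
  by (rule lsupp_short[OF Iq_lsupp]) simp_all
lemma Iq_m: "f \<in> kH Q \<Longrightarrow> lsupp m f \<Longrightarrow> f \<in> Iq"
  using lsupp_pow[OF m1] powm by blast
lemma Iq_padd: "a \<in> Iq \<Longrightarrow> b \<in> Iq \<Longrightarrow> padd a b \<in> Iq" by (rule ideal_gen.add)
lemma Iq_psub: "a \<in> Iq \<Longrightarrow> b \<in> Iq \<Longrightarrow> psub a b \<in> Iq" by (rule ideal_psub[OF sigkH])
lemma Iq_smul: "a \<in> Iq \<Longrightarrow> smul c a \<in> Iq" by (rule ideal_smul[OF sigkH])
lemma Iq_lmul: "a \<in> Iq \<Longrightarrow> u \<in> kH Q \<Longrightarrow> pmult Q u a \<in> Iq" by (rule ideal_lmul[OF sigkH])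
lemma Iq_rmul: "a \<in> Iq \<Longrightarrow> w \<in> kH Q \<Longrightarrow> pmult Q a w \<in> Iq" by (rule ideal_rmul[OF sigkH])
lemma Iq_zero: "pzero \<in> Iq" by (rule ideal_gen.zero)

lemma tsub_Iq: "tsub Q Iq"
  unfolding tsub_def using Iq_kH Iq_padd Iq_lmul Iq_zero by blast

lemma arr_notin_Iq: "arr Q a \<notin> Iq"
proof
  assume "arr Q a \<in> Iq"
  then have "arr Q a (src Q a, [a]) = (0::'k)" by (rule Iq_1)
  then show False by (simp add: arr_def pbasis_apply)
qed

lemma idem_notin_Iq: "idem x \<notin> Iq"
proof
  assume "idem x \<in> Iq"
  then have "(idem x :: ('v,'e,'k) elem) (x, []) = 0" by (rule Iq_0)
  then show False by (simp add: idem_def pbasis_apply)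
qed

lemma smul_arr_Iq: "smul c (arr Q a) \<in> Iq \<Longrightarrow> c = 0"
proof -
  assume "smul c (arr Q a) \<in> Iq"
  then have "smul c (arr Q a) (src Q a, [a]) = (0::'k)" by (rule Iq_1)
  then show "c = 0" by (simp add: arr_def pbasis_apply)
qed

end


context qset begin

definition TL :: "'v \<Rightarrow> ('v,'e,'k) elem set" where
  "TL d = {padd h g | h g. h \<in> kH Q \<and> dsupp d h \<and> g \<in> Iq}"

lemma padd_zero_right[simp]: "padd h pzero = h" by (rule ext) simp
lemma padd_zero_left[simp]: "padd pzero h = h" by (rule ext) simp

lemma TL_kH: "x \<in> TL d \<Longrightarrow> x \<in> kH Q"
proof -
  assume "x \<in> TL d"
  then obtain h g where x: "x = padd h g" "h \<in> kH Q" "g \<in> Iq" unfolding TL_def by blast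
  have "padd h g \<in> kH Q" by (rule padd_kH) (auto intro: Iq_kH x)
  then show ?thesis using x by simp
qed

lemma Iq_TL: "Iq \<subseteq> TL d"
proof
  fix g assume "g \<in> Iq"
  moreover have "pzero \<in> kH Q" "dsupp d pzero" by (auto simp: dsupp_def)
  ultimately have "padd pzero g \<in> TL d" unfolding TL_def by blast
  then show "g \<in> TL d" by simp
qed

lemma dsupp_TL: "h \<in> kH Q \<Longrightarrow> dsupp d h \<Longrightarrow> h \<in> TL d"
proof -
  assume "h \<in> kH Q" "dsupp d h"
  then have "padd h pzero \<in> TL d" unfolding TL_def using Iq_zero by blast
  then show ?thesis by simp
qed

end


context qset begin

lemma dsupp_padd: "dsupp d a \<Longrightarrow> dsupp d b \<Longrightarrow> dsupp d (padd a b)"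
  unfolding dsupp_def
proof (intro allI impI)
  fix r assume A: "\<forall>r. a r \<noteq> 0 \<longrightarrow> fst r = d" "\<forall>r. b r \<noteq> 0 \<longrightarrow> fst r = d" and "padd a b r \<noteq> 0"
  then have "a r \<noteq> 0 \<or> b r \<noteq> 0" by auto
  then show "fst r = d" using A by blast
qed

lemma tsub_TL: "tsub Q (TL d)"
  unfolding tsub_def
proof (intro conjI ballI)
  show "TL d \<subseteq> kH Q" using TL_kH by blast
  show "pzero \<in> TL d" using Iq_TL Iq_zero by blast
next
  fix x y :: "('v,'e,'k) elem" assume "x \<in> TL d" "y \<in> TL d"
  then obtain h1 g1 h2 g2 where x: "x = padd h1 g1" "h1 \<in> kH Q" "dsupp d h1" "g1 \<in> Iq"
     and y: "y = padd h2 g2" "h2 \<in> kH Q" "dsupp d h2" "g2 \<in> Iq" unfolding TL_def by blast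
  have "padd x y = padd (padd h1 h2) (padd g1 g2)" by (rule ext) (simp add: x y add_ac)
  moreover have "padd h1 h2 \<in> kH Q" "dsupp d (padd h1 h2)" "padd g1 g2 \<in> Iq"
    using x y by (auto intro: padd_kH dsupp_padd Iq_padd)
  ultimately show "padd x y \<in> TL d" unfolding TL_def by blast
next
  fix u x :: "('v,'e,'k) elem" assume u: "u \<in> kH Q" and "x \<in> TL d"
  then obtain h g where x: "x = padd h g" "h \<in> kH Q" "dsupp d h" "g \<in> Iq" unfolding TL_def by blast
  have "pmult Q u x = padd (pmult Q u h) (pmult Q u g)" using x by (simp add: pm_padd_right)
  moreover have "pmult Q u h \<in> kH Q" "dsupp d (pmult Q u h)" "pmult Q u g \<in> Iq"
    using x u by (auto intro: pm_kH dsupp_pm Iq_lmul)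
  ultimately show "pmult Q u x \<in> TL d" unfolding TL_def by blast
qed

lemma dsupp_idem: "dsupp x (idem x)"
  by (simp add: dsupp_def idem_def pbasis_apply)

lemma dsupp_arr: "dsupp (src Q a) (arr Q a)"
  by (simp add: dsupp_def arr_def pbasis_apply)

end


context qset begin

lemma Pmod_eq: "d \<in> verts Q \<Longrightarrow> Pmod Q Iq d = (emb ` TL d, emb ` Iq)"
proof -
  assume dv: "d \<in> verts Q"
  have E: "{emb (padd (pmult Q f (pbasis (d, []))) g) | f g. f \<in> kH Q \<and> g \<in> Iq} = emb ` TL d"
  proof (rule set_eqI, rule iffI)
    fix v :: "('v,'e,'k) vec"
    assume "v \<in> {emb (padd (pmult Q f (pbasis (d, []))) g) | f g. f \<in> kH Q \<and> g \<in> Iq}"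
    then obtain f g where v: "v = emb (padd (pmult Q f (pbasis (d, []))) g)" "f \<in> kH Q" "g \<in> Iq"
      by blast
    let ?h = "pmult Q f (idem d)"
    have hk: "?h \<in> kH Q" by (rule pm_kH[OF v(2) idem_kH[OF dv]])
    have hd: "dsupp d ?h" by (rule dsupp_pm[OF dsupp_idem])
    have "padd ?h g \<in> TL d" unfolding TL_def using hk hd v(3) by blast
    then show "v \<in> emb ` TL d" using v(1) unfolding idem_def by simp
  next
    fix v :: "('v,'e,'k) vec"
    assume "v \<in> emb ` TL d"
    then obtain x where x: "x \<in> TL d" "v = emb x" by blast
    then obtain h g where hg: "x = padd h g" "h \<in> kH Q" "dsupp d h" "g \<in> Iq" unfolding TL_def by blast
    have "pmult Q h (pbasis (d, [])) = h" using pm_idem_right[OF hg(2) hg(3)] by (simp add: idem_def)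
    then have "v = emb (padd (pmult Q h (pbasis (d, []))) g)" using x hg by simp
    then show "v \<in> {emb (padd (pmult Q f (pbasis (d, []))) g) | f g. f \<in> kH Q \<and> g \<in> Iq}"
      using hg by blast
  qed
  show ?thesis unfolding Pmod_def E by (rule refl)
qed

end


context qset begin

lemma submods_emb:
  assumes dv: "d \<in> verts Q"
  shows "emb ` T \<in> submods Q (Pmod Q Iq d) \<longleftrightarrow> tsub Q T \<and> Iq \<subseteq> T \<and> T \<subseteq> TL d"
proof
  assume "emb ` T \<in> submods Q (Pmod Q Iq d)"
  then have s0: "submod Q (emb ` T) \<and> emb ` Iq \<subseteq> emb ` T \<and> emb ` T \<subseteq> emb ` TL d"
    unfolding submods_def Pmod_eq[OF dv] fst_conv snd_conv mem_Collect_eq .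
  then have s: "submod Q (emb ` T)" "Iq \<subseteq> T" "T \<subseteq> TL d" unfolding emb_image_subset by blast+
  have "{x. emb x \<in> emb ` T} = T" unfolding emb_in_image by blast
  then show "tsub Q T \<and> Iq \<subseteq> T \<and> T \<subseteq> TL d" using submod_tsub[OF s(1)] s(2,3) by simp
next
  assume H: "tsub Q T \<and> Iq \<subseteq> T \<and> T \<subseteq> TL d"
  then have "submod Q (emb ` T)" by (intro tsub_submod) blast
  moreover have "emb ` Iq \<subseteq> emb ` T" "emb ` T \<subseteq> emb ` TL d" unfolding emb_image_subset using H by blast+
  ultimately show "emb ` T \<in> submods Q (Pmod Q Iq d)"
    unfolding submods_def Pmod_eq[OF dv] fst_conv snd_conv mem_Collect_eq by blast
qed

lemma submods_T:
  assumes dv: "d \<in> verts Q" and N: "N \<in> submods Q (Pmod Q Iq d)"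
  shows "N = emb ` {x. emb x \<in> N} \<and> tsub Q {x. emb x \<in> N} \<and> Iq \<subseteq> {x. emb x \<in> N}
     \<and> {x. emb x \<in> N} \<subseteq> TL d"
proof -
  have "N \<subseteq> emb ` TL d" using N unfolding submods_def Pmod_eq[OF dv] fst_conv snd_conv mem_Collect_eq
    by blast
  then have "N \<subseteq> range emb" by blast
  then have e: "N = emb ` {x. emb x \<in> N}" by (rule image_emb_T)
  have "emb ` {x. emb x \<in> N} \<in> submods Q (Pmod Q Iq d)" using N by (simp only: e[symmetric])
  then have R: "tsub Q {x. emb x \<in> N} \<and> Iq \<subseteq> {x. emb x \<in> N} \<and> {x. emb x \<in> N} \<subseteq> TL d"
    by (rule iffD1[OF submods_emb[OF dv]])
  from e R show ?thesis by (rule conjI)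
qed

end


interpretation V: vector_space "smul :: 'k::field \<Rightarrow> ('v,'e,'k) elem \<Rightarrow> ('v,'e,'k) elem"
  by unfold_locales (auto simp: smul_def plus_fun_def algebra_simps)

lemma padd_plus: "padd f g = f + g" by (simp add: padd_def plus_fun_def)
lemma pzero_0: "pzero = 0" by (simp add: pzero_def zero_fun_def)

lemma sum_fun_apply': "(sum F A) r = (\<Sum>p\<in>A. F p r)"
proof (cases "finite A")
  case True then show ?thesis by (induction rule: finite_induct) (auto simp: plus_fun_def zero_fun_def)
next
  case False then show ?thesis by (simp add: zero_fun_def)
qed

context qset begin

definition G :: "'v \<Rightarrow> ('v,'e) path set" where
  "G d = {p. valid_path Q p \<and> fst p = d \<and> length (snd p) < m}"

lemma finite_G: "finite (G d)"
proof -
  have "G d \<subseteq> {d} \<times> {xs. set xs \<subseteq> arrs Q \<and> length xs \<le> m}"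
    unfolding G_def valid_path_def by auto
  moreover have "finite ({d} \<times> {xs. set xs \<subseteq> arrs Q \<and> length xs \<le> m})"
    using finite_lists_length_le[OF fa] by blast
  ultimately show ?thesis by (rule finite_subset)
qed

lemma tsub_subspace: "tsub Q T \<Longrightarrow> V.subspace T"
  unfolding V.subspace_def
  using tsub_zero[of T] tsub_padd[of T] tsub_smul[of T] by (simp add: padd_plus pzero_0)

lemma decomp:
  assumes h: "h \<in> kH Q" and hd: "dsupp d h"
  shows "\<exists>hl\<in>Iq. h = padd (sum (\<lambda>p. smul (h p) (pbasis p)) (G d)) hl"
proof -
  define hl where "hl = (\<lambda>r. if m \<le> length (snd r) then h r else 0)"
  have "{r. hl r \<noteq> 0} \<subseteq> {r. h r \<noteq> 0}" unfolding hl_def by auto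
  then have hlk: "hl \<in> kH Q" using h unfolding kH_def by (auto intro: finite_subset)
  have "lsupp m hl" unfolding lsupp_def hl_def by auto
  then have hlI: "hl \<in> Iq" using Iq_m hlk by blast
  have "h = padd (sum (\<lambda>p. smul (h p) (pbasis p)) (G d)) hl"
  proof (rule ext)
    fix r
    have "(sum (\<lambda>p. smul (h p) (pbasis p)) (G d)) r = (\<Sum>p\<in>G d. if r = p then h p else 0)"
      unfolding sum_fun_apply' by (rule sum.cong) (auto simp: pbasis_apply)
    also have "\<dots> = (if r \<in> G d then h r else 0)" using finite_G by (simp add: sum.delta)
    finally have s: "(sum (\<lambda>p. smul (h p) (pbasis p)) (G d)) r = (if r \<in> G d then h r else 0)" .
    show "h r = padd (sum (\<lambda>p. smul (h p) (pbasis p)) (G d)) hl r"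
    proof (cases "h r = 0")
      case True then show ?thesis unfolding padd_apply s by (simp add: hl_def G_def)
    next
      case False
      then have "valid_path Q r" "fst r = d" using h hd kH_valid unfolding dsupp_def by blast+
      then show ?thesis unfolding padd_apply s by (auto simp: hl_def G_def)
    qed
  qed
  then show ?thesis using hlI by blast
qed

lemma sum_in_span: "sum (\<lambda>p. smul (h p) (pbasis p)) (G d) \<in> V.span (pbasis ` G d)"
  by (intro V.span_sum V.span_scale V.span_base) auto

lemma chain_bound:
  assumes dv: "d \<in> verts Q" and hc: "has_chain Q (Pmod Q Iq d) n"
  shows "n \<le> card (G d)"
proof -
  obtain c where c0: "c 0 = snd (Pmod Q Iq d)" and cn: "c n = fst (Pmod Q Iq d)"
    and cs: "\<forall>i\<le>n. c i \<in> submods Q (Pmod Q Iq d)" and st: "\<forall>i<n. c i \<subset> c (Suc i)"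
    using hc unfolding has_chain_def by blast
  define T where "T i = {x. emb x \<in> c i}" for i
  have cT: "c i = emb ` T i" "tsub Q (T i)" "Iq \<subseteq> T i" "T i \<subseteq> TL d" if "i \<le> n" for i
    using submods_T[OF dv, of "c i"] cs that unfolding T_def by blast+
  have stT: "T i \<subset> T (Suc i)" if "i < n" for i
  proof -
    have "c i \<subset> c (Suc i)" using st that by blast
    then have "emb ` T i \<subset> emb ` T (Suc i)" using that cT(1)[of i] cT(1)[of "Suc i"] by simp
    then show ?thesis by (simp add: psubset_eq)
  qed
  have monoT: "T i \<subseteq> T j" if "i \<le> j" "j \<le> n" for i j
    using that
  proof (induction j)
    case 0 then show ?case by simp
  next
    case (Suc j)
    show ?case
    proof (cases "i = Suc j")
      case True then show ?thesis by simp
    next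
      case False
      then have "T i \<subseteq> T j" using Suc by simp
      also have "T j \<subseteq> T (Suc j)" using stT[of j] Suc.prems by auto
      finally show ?thesis .
    qed
  qed
  have ex: "\<exists>x. x \<in> T (Suc i) \<and> x \<notin> T i \<and> x \<in> V.span (pbasis ` G d)" if i: "i < n" for i
  proof -
    obtain y where y: "y \<in> T (Suc i)" "y \<notin> T i" using stT[OF i] by blast
    have "y \<in> TL d" using y cT[of "Suc i"] i by auto
    then obtain h g where hg: "y = padd h g" "h \<in> kH Q" "dsupp d h" "g \<in> Iq" unfolding TL_def by blast
    obtain hl where hl: "hl \<in> Iq" "h = padd (sum (\<lambda>p. smul (h p) (pbasis p)) (G d)) hl"
      using decomp[OF hg(2,3)] by blast
    let ?x = "sum (\<lambda>p. smul (h p) (pbasis p)) (G d)"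
    have r: "padd hl g \<in> Iq" using hl hg by (simp add: Iq_padd)
    have yx: "y = padd ?x (padd hl g)"
    proof (rule ext)
      fix r
      have e1: "h r = ?x r + hl r" using fun_cong[OF hl(2), of r] by (simp only: padd_apply)
      have e2: "y r = h r + g r" using fun_cong[OF hg(1), of r] by (simp only: padd_apply)
      show "y r = padd ?x (padd hl g) r" unfolding padd_apply e2 e1 by (simp add: add.assoc)
    qed
    have xy: "?x = psub y (padd hl g)" by (rule ext) (simp add: yx)
    have "?x \<in> T (Suc i)" unfolding xy
      using tsub_psub[OF cT(2)[of "Suc i"] y(1)] r cT(3)[of "Suc i"] i by auto
    moreover have "?x \<notin> T i"
    proof
      assume "?x \<in> T i"
      then have "padd ?x (padd hl g) \<in> T i"
        using tsub_padd[OF cT(2)[of i]] r cT(3)[of i] i by auto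
      then show False using y yx by simp
    qed
    ultimately show ?thesis using sum_in_span by blast
  qed
  then obtain xf where xf: "\<And>i. i < n \<Longrightarrow> xf i \<in> T (Suc i) \<and> xf i \<notin> T i \<and> xf i \<in> V.span (pbasis ` G d)"
    by metis
  have ind: "k \<le> n \<Longrightarrow> V.independent (xf ` {..<k}) \<and> card (xf ` {..<k}) = k" for k
  proof (induction k)
    case 0 show ?case by (simp only: lessThan_0 image_empty card.empty) (rule conjI[OF V.independent_empty refl])
  next
    case (Suc k)
    then have k: "k < n" by simp
    have sub: "xf ` {..<k} \<subseteq> T k"
    proof
      fix z assume "z \<in> xf ` {..<k}"
      then obtain i where i: "i < k" "z = xf i" by blast
      then have "z \<in> T (Suc i)" using xf k by auto
      moreover have "T (Suc i) \<subseteq> T k" using monoT i k by auto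
      ultimately show "z \<in> T k" by blast
    qed
    have "V.span (xf ` {..<k}) \<subseteq> T k"
      by (rule V.span_minimal[OF sub tsub_subspace[OF cT(2)]]) (use k in simp)
    then have nsp: "xf k \<notin> V.span (xf ` {..<k})" using xf k by blast
    have nin: "xf k \<notin> xf ` {..<k}" using sub xf k by blast
    have e: "xf ` {..<Suc k} = insert (xf k) (xf ` {..<k})" by (simp add: lessThan_Suc)
    have IHc: "V.independent (xf ` {..<k}) \<and> card (xf ` {..<k}) = k" by (rule Suc.IH) (use k in linarith)
    note IH = conjunct1[OF IHc] conjunct2[OF IHc]
    have i1: "V.independent (insert (xf k) (xf ` {..<k}))" by (rule V.independent_insertI[OF nsp IH(1)])
    have i2: "card (insert (xf k) (xf ` {..<k})) = Suc k" using IH(2) nin by simp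
    show ?case unfolding e by (rule conjI[OF i1 i2])
  qed
  have Ic: "V.independent (xf ` {..<n}) \<and> card (xf ` {..<n}) = n" by (rule ind) simp
  note I = conjunct1[OF Ic] conjunct2[OF Ic]
  have sp: "xf ` {..<n} \<subseteq> V.span (pbasis ` G d)" using xf by blast
  have "card (xf ` {..<n}) \<le> card ((pbasis :: ('v,'e) path \<Rightarrow> ('v,'e,'k) elem) ` G d)"
    using V.independent_span_bound[OF finite_imageI[OF finite_G] I(1) sp] by (rule conjunct2)
  also have "\<dots> \<le> card (G d)" using finite_G by (rule card_image_le)
  finally show ?thesis using I(2) by simp
qed

end


context qset begin

lemma emb_psubset: "emb ` A \<subset> emb ` B \<longleftrightarrow> A \<subset> B"
  by (simp add: psubset_eq)

lemma has_chain_mk: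
  assumes dv: "d \<in> verts Q" and len: "length Ts = Suc n"
    and h0: "Ts ! 0 = Iq" and hn: "Ts ! n = TL d"
    and ts: "\<And>i. i \<le> n \<Longrightarrow> tsub Q (Ts ! i) \<and> Iq \<subseteq> Ts ! i \<and> Ts ! i \<subseteq> TL d"
    and st: "\<And>i. i < n \<Longrightarrow> Ts ! i \<subset> Ts ! Suc i"
  shows "has_chain Q (Pmod Q Iq d) n"
  unfolding has_chain_def
proof (intro exI[of _ "\<lambda>i. emb ` (Ts ! i)"] conjI allI impI)
  show "emb ` (Ts ! 0) = snd (Pmod Q Iq d)" using h0 Pmod_eq[OF dv] by simp
  show "emb ` (Ts ! n) = fst (Pmod Q Iq d)" using hn Pmod_eq[OF dv] by simp
  fix i
  show "emb ` (Ts ! i) \<in> submods Q (Pmod Q Iq d)" if "i \<le> n"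
    using ts[OF that] by (subst submods_emb[OF dv])
  show "emb ` (Ts ! i) \<subset> emb ` (Ts ! Suc i)" if "i < n"
    using st[OF that] by (subst emb_psubset)
qed

lemma has_chain_le:
  assumes dv: "d \<in> verts Q" and ml: "mod_length Q (Pmod Q Iq d) = 2"
  shows "has_chain Q (Pmod Q Iq d) 2" and "\<not> has_chain Q (Pmod Q Iq d) 3"
proof -
  have itl: "idem d \<in> TL d" using dsupp_TL[OF idem_kH[OF dv] dsupp_idem] .
  have h1: "has_chain Q (Pmod Q Iq d) 1"
  proof (rule has_chain_mk[OF dv, of "[Iq, TL d]"])
    fix i :: nat assume "i \<le> 1"
    then have "i = 0 \<or> i = 1" by auto
    then show "tsub Q ([Iq, TL d] ! i) \<and> Iq \<subseteq> [Iq, TL d] ! i \<and> [Iq, TL d] ! i \<subseteq> TL d"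
    proof
      assume "i = 0" then show ?thesis using tsub_Iq Iq_TL by simp
    next
      assume "i = 1" then show ?thesis using tsub_TL Iq_TL by simp
    qed
  next
    fix i :: nat assume "i < 1"
    then have "i = 0" by simp
    moreover have "Iq \<subset> TL d" using Iq_TL itl idem_notin_Iq by blast
    ultimately show "[Iq, TL d] ! i \<subset> [Iq, TL d] ! Suc i" by simp
  qed simp_all
  have bd: "\<And>y. has_chain Q (Pmod Q Iq d) y \<Longrightarrow> y \<le> card (G d)" using chain_bound[OF dv] by blast
  show "has_chain Q (Pmod Q Iq d) 2"
    using GreatestI_nat[of "has_chain Q (Pmod Q Iq d)", OF h1 bd] ml unfolding mod_length_def by simp
  show "\<not> has_chain Q (Pmod Q Iq d) 3"
  proof
    assume "has_chain Q (Pmod Q Iq d) 3"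
    then have "3 \<le> mod_length Q (Pmod Q Iq d)"
      unfolding mod_length_def by (rule Greatest_le_nat[of "has_chain Q (Pmod Q Iq d)", OF _ bd])
    then show False using ml by simp
  qed
qed

end


context qset begin

definition T1 :: "'v \<Rightarrow> 'e \<Rightarrow> ('v,'e,'k) elem set" where
  "T1 d a = {x \<in> TL d. x (d, []) = 0 \<and> x (d, [a]) = 0}"
definition T2 :: "'v \<Rightarrow> ('v,'e,'k) elem set" where
  "T2 d = {x \<in> TL d. x (d, []) = 0}"

lemma tsub_T2: "tsub Q (T2 d)"
  unfolding tsub_def T2_def
proof (intro conjI ballI subsetI)
  show "pzero \<in> {x \<in> TL d. x (d, []) = 0}" using Iq_TL Iq_zero by auto
  fix x assume "x \<in> {x \<in> TL d. x (d, []) = 0}" then show "x \<in> kH Q" using TL_kH by blast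
next
  fix x y assume "x \<in> {x \<in> TL d. x (d, []) = (0::'k)}" "y \<in> {x \<in> TL d. x (d, []) = (0::'k)}"
  then show "padd x y \<in> {x \<in> TL d. x (d, []) = 0}" using tsub_padd[OF tsub_TL] by auto
next
  fix u x :: "('v,'e,'k) elem" assume "u \<in> kH Q" "x \<in> {x \<in> TL d. x (d, []) = (0::'k)}"
  then show "pmult Q u x \<in> {x \<in> TL d. x (d, []) = 0}" using tsub_pm[OF tsub_TL] by (auto simp: pm_short0)
qed

lemma tsub_T1: "tsub Q (T1 d a)"
  unfolding tsub_def T1_def
proof (intro conjI ballI subsetI)
  show "pzero \<in> {x \<in> TL d. x (d, []) = 0 \<and> x (d, [a]) = 0}" using Iq_TL Iq_zero by auto
  fix x assume "x \<in> {x \<in> TL d. x (d, []) = (0::'k) \<and> x (d, [a]) = 0}" then show "x \<in> kH Q" using TL_kH by blast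
next
  fix x y assume "x \<in> {x \<in> TL d. x (d, []) = (0::'k) \<and> x (d, [a]) = 0}" "y \<in> {x \<in> TL d. x (d, []) = (0::'k) \<and> x (d, [a]) = 0}"
  then show "padd x y \<in> {x \<in> TL d. x (d, []) = 0 \<and> x (d, [a]) = 0}" using tsub_padd[OF tsub_TL] by auto
next
  fix u x :: "('v,'e,'k) elem" assume "u \<in> kH Q" "x \<in> {x \<in> TL d. x (d, []) = (0::'k) \<and> x (d, [a]) = 0}"
  then show "pmult Q u x \<in> {x \<in> TL d. x (d, []) = 0 \<and> x (d, [a]) = 0}"
    using tsub_pm[OF tsub_TL] by (auto simp: pm_short0 pm_short1)
qed

lemma Iq_T1: "Iq \<subseteq> T1 d a" unfolding T1_def using Iq_TL Iq_0 Iq_1 by auto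
lemma Iq_T2: "Iq \<subseteq> T2 d" unfolding T2_def using Iq_TL Iq_0 by auto
lemma T1_T2: "T1 d a \<subseteq> T2 d" unfolding T1_def T2_def by auto
lemma T2_TL: "T2 d \<subseteq> TL d" unfolding T2_def by auto

lemma chain3:
  assumes dv: "d \<in> verts Q" and a: "a \<in> arrs Q" "src Q a = d"
    and h: "h \<in> kH Q" "dsupp d h" "h (d, []) = 0" "h (d, [a]) = 0" "h \<notin> Iq"
  shows "has_chain Q (Pmod Q Iq d) 3"
proof (rule has_chain_mk[OF dv, of "[Iq, T1 d a, T2 d, TL d]"])
  fix i :: nat assume "i \<le> 3"
  then have "i = 0 \<or> i = 1 \<or> i = 2 \<or> i = 3" by auto
  then show "tsub Q ([Iq, T1 d a, T2 d, TL d] ! i) \<and> Iq \<subseteq> [Iq, T1 d a, T2 d, TL d] ! i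
      \<and> [Iq, T1 d a, T2 d, TL d] ! i \<subseteq> TL d"
  proof (elim disjE)
    assume "i = 0" then show ?thesis using tsub_Iq Iq_TL by simp
  next
    assume "i = 1" then show ?thesis using tsub_T1 Iq_T1 T1_T2[of d a] T2_TL[of d] by simp
  next
    assume "i = 2" then show ?thesis using tsub_T2 Iq_T2 T2_TL by (simp add: numeral_eq_Suc)
  next
    assume "i = 3" then show ?thesis using tsub_TL Iq_TL by (simp add: numeral_eq_Suc)
  qed
next
  have hT1: "h \<in> T1 d a" unfolding T1_def using dsupp_TL[OF h(1,2)] h(3,4) by simp
  have aT2: "arr Q a \<in> T2 d" unfolding T2_def using dsupp_TL[OF arr_kH[OF a(1)], of d] dsupp_arr[of a] a
    by (simp add: arr_def pbasis_apply)
  have aT1: "arr Q a \<notin> T1 d a" unfolding T1_def using a by (simp add: arr_def pbasis_apply)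
  have iTL: "idem d \<in> TL d" using dsupp_TL[OF idem_kH[OF dv] dsupp_idem] .
  have iT2: "idem d \<notin> T2 d" unfolding T2_def by (simp add: idem_def pbasis_apply)
  have s1: "Iq \<subset> T1 d a" using Iq_T1 hT1 h(5) by blast
  have s2: "T1 d a \<subset> T2 d" using T1_T2 aT2 aT1 by blast
  have s3: "T2 d \<subset> TL d" using T2_TL iTL iT2 by blast
  fix i :: nat assume "i < 3"
  then have "i = 0 \<or> i = 1 \<or> i = 2" by auto
  then show "[Iq, T1 d a, T2 d, TL d] ! i \<subset> [Iq, T1 d a, T2 d, TL d] ! Suc i"
  proof (elim disjE)
    assume "i = 0" then show ?thesis using s1 by simp
  next
    assume "i = 1" then show ?thesis using s2 by simp
  next
    assume "i = 2" then show ?thesis using s3 by (simp add: numeral_eq_Suc)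
  qed
qed simp_all

end


context qset begin

lemma dsupp_psub: "dsupp d a \<Longrightarrow> dsupp d b \<Longrightarrow> dsupp d (psub a b)"
  unfolding dsupp_def
proof (intro allI impI)
  fix r assume A: "\<forall>r. a r \<noteq> 0 \<longrightarrow> fst r = d" "\<forall>r. b r \<noteq> 0 \<longrightarrow> fst r = d" and "psub a b r \<noteq> 0"
  then have "a r \<noteq> 0 \<or> b r \<noteq> 0" by auto
  then show "fst r = d" using A by blast
qed

lemma dsupp_smul: "dsupp d a \<Longrightarrow> dsupp d (smul c a)"
  unfolding dsupp_def by simp

lemma smul_zero_left: "smul 0 f = pzero" by (rule ext) simp

end

locale qmain = qset Q sig m for Q :: "('v,'e) quiver" and sig :: "('v,'e,'k::field) elem set" and m +
  fixes d :: 'v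
  assumes dv: "d \<in> verts Q" and ml: "mod_length Q (Pmod Q (ideal_gen Q sig) d) = 2"
begin

lemmas h2 = has_chain_le(1)[OF dv ml]
lemmas no3 = has_chain_le(2)[OF dv ml]

lemma no_chain3:
  assumes a: "a \<in> arrs Q" "src Q a = d"
    and h: "h \<in> kH Q" "dsupp d h" "h (d, []) = 0" "h (d, [a]) = 0"
  shows "h \<in> Iq"
  using chain3[OF dv a h] no3 by blast

lemma arrow_exists: "\<exists>a\<in>arrs Q. src Q a = d"
proof (rule ccontr)
  assume na: "\<not> (\<exists>a\<in>arrs Q. src Q a = d)"
  obtain c where c0: "c 0 = snd (Pmod Q Iq d)" and c2: "c 2 = fst (Pmod Q Iq d)"
    and cs: "\<forall>i\<le>2. c i \<in> submods Q (Pmod Q Iq d)" and st: "\<forall>i<2. c i \<subset> c (Suc i)"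
    using h2 unfolding has_chain_def by blast
  have c1s: "c 1 \<in> submods Q (Pmod Q Iq d)" using cs by simp
  define T where "T = {x. emb x \<in> c 1}"
  have TT: "c 1 = emb ` T" "tsub Q T" "Iq \<subseteq> T" "T \<subseteq> TL d"
    using submods_T[OF dv c1s] unfolding T_def[symmetric] by blast+
  have "c 0 \<subset> c 1" using st by simp
  then have "emb ` Iq \<subset> emb ` T" using c0 TT(1) Pmod_eq[OF dv] by simp
  then have "Iq \<subset> T" by (simp only: emb_psubset)
  then obtain x where x: "x \<in> T" "x \<notin> Iq" by blast
  then have "x \<in> TL d" using TT(4) by blast
  then obtain h g where hg: "x = padd h g" "h \<in> kH Q" "dsupp d h" "g \<in> Iq" unfolding TL_def by blast
  have hx: "h = psub x g" by (rule ext) (simp add: hg(1))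
  have hT: "h \<in> T" unfolding hx using tsub_psub[OF TT(2) x(1)] hg(4) TT(3) by blast
  have hI: "h \<notin> Iq"
  proof
    assume "h \<in> Iq" then have "padd h g \<in> Iq" using hg(4) Iq_padd by blast
    then show False using x hg by simp
  qed
  have hid: "h = smul (h (d, [])) (idem d)"
  proof (rule ext)
    fix r :: "('v,'e) path"
    obtain y xs where r: "r = (y, xs)" by (cases r)
    show "h r = smul (h (d, [])) (idem d) r"
    proof (cases "h r = 0")
      case True
      then show ?thesis by (auto simp: idem_def pbasis_apply)
    next
      case False
      then have v: "valid_path Q r" "fst r = d" using hg(2,3) kH_valid unfolding dsupp_def by blast+
      have "xs = []"
      proof (rule ccontr)
        assume "xs \<noteq> []"
        then obtain a ys where "xs = a # ys" by (cases xs) auto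
        then have "a \<in> arrs Q" "src Q a = d" using v r by (auto simp: vCons)
        then show False using na by blast
      qed
      then have "r = (d, [])" using v r by simp
      then show ?thesis by (simp add: idem_def pbasis_apply)
    qed
  qed
  have c0ne: "h (d, []) \<noteq> 0"
  proof
    assume "h (d, []) = 0"
    then have "h = pzero" using hid by (simp add: smul_zero_left pzero_0)
    then show False using hI Iq_zero by simp
  qed
  have "smul (1 / h (d, [])) h = idem d"
    by (subst hid) (rule ext, simp add: c0ne)
  then have iT: "idem d \<in> T" using tsub_smul[OF TT(2) hT] by metis
  have "TL d \<subseteq> T"
  proof
    fix z assume "z \<in> TL d"
    then obtain h' g' where z: "z = padd h' g'" "h' \<in> kH Q" "dsupp d h'" "g' \<in> Iq" unfolding TL_def by blast
    have "pmult Q h' (idem d) \<in> T" by (rule tsub_pm[OF TT(2) z(2) iT])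
    then have "h' \<in> T" using pm_idem_right[OF z(2,3)] by simp
    then show "z \<in> T" unfolding z(1) using tsub_padd[OF TT(2)] z(4) TT(3) by blast
  qed
  then have "T = TL d" using TT(4) by blast
  then have "c 1 = c 2" using TT(1) c2 Pmod_eq[OF dv] by simp
  moreover have "c 1 \<subset> c 2" using st by (simp add: numeral_eq_Suc)
  ultimately show False by simp
qed

definition alpha :: 'e where "alpha = (SOME a. a \<in> arrs Q \<and> src Q a = d)"

lemma alpha: "alpha \<in> arrs Q" "src Q alpha = d"
  using someI_ex[OF arrow_exists[unfolded Bex_def]] unfolding alpha_def by blast+

lemma alpha_unique: "a \<in> arrs Q \<Longrightarrow> src Q a = d \<Longrightarrow> a = alpha"
proof (rule ccontr)
  assume a: "a \<in> arrs Q" "src Q a = d" and ne: "a \<noteq> alpha"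
  have "arr Q alpha \<in> Iq"
  proof (rule no_chain3[OF a])
    show "arr Q alpha \<in> kH Q" by (rule arr_kH[OF alpha(1)])
    show "dsupp d (arr Q alpha)" using dsupp_arr[of alpha] alpha(2) by simp
    show "arr Q alpha (d, []) = 0" by (simp add: arr_def pbasis_apply)
    show "arr Q alpha (d, [a]) = 0" using ne by (simp add: arr_def pbasis_apply)
  qed
  then show False using arr_notin_Iq by blast
qed

lemma beta_alpha:
  assumes b: "b \<in> arrs Q"
  shows "pmult Q (arr Q b) (arr Q alpha) \<in> Iq"
proof (cases "src Q b = tgt Q alpha")
  case True
  have v: "valid_path Q (d, [alpha, b])" using alpha b True wf dv by (simp add: vCons)
  have e: "pmult Q (arr Q b) (arr Q alpha) = (pbasis (d, [alpha, b]) :: ('v,'e,'k) elem)"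
    unfolding arr_def pm_pbasis using True v alpha by simp
  have "(pbasis (d, [alpha, b]) :: ('v,'e,'k) elem) \<in> Iq"
  proof (rule no_chain3[OF alpha])
    show "pbasis (d, [alpha, b]) \<in> kH Q" by (rule pbasis_kH[OF v])
    show "dsupp d (pbasis (d, [alpha, b]))" by (simp add: dsupp_def pbasis_apply)
    show "(pbasis (d, [alpha, b]) :: ('v,'e,'k) elem) (d, []) = 0" by (simp add: pbasis_apply)
    show "(pbasis (d, [alpha, b]) :: ('v,'e,'k) elem) (d, [alpha]) = 0" by (simp add: pbasis_apply)
  qed
  then show ?thesis using e by simp
next
  case False
  have e: "pmult Q (arr Q b) (arr Q alpha) = (pzero :: ('v,'e,'k) elem)"
    unfolding arr_def pm_pbasis using False by simp
  then show ?thesis using Iq_zero by simp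
qed

lemma Gp:
  assumes h: "h \<in> kH Q" "dsupp d h"
  shows "\<exists>i\<in>Iq. h = padd (padd (smul (h (d, [])) (idem d)) (smul (h (d, [alpha])) (arr Q alpha))) i"
proof -
  let ?c0 = "h (d, [])" and ?c1 = "h (d, [alpha])"
  let ?s = "padd (smul ?c0 (idem d)) (smul ?c1 (arr Q alpha))"
  let ?h' = "psub h ?s"
  have sk: "?s \<in> kH Q" using idem_kH[OF dv] arr_kH[OF alpha(1)] by (intro padd_kH smul_kH)
  have sd: "dsupp d ?s" using dsupp_idem[of d] dsupp_arr[of alpha] alpha(2)
    by (intro dsupp_padd dsupp_smul) auto
  have "?h' \<in> Iq"
  proof (rule no_chain3[OF alpha])
    show "?h' \<in> kH Q" using h(1) sk by (rule psub_kH)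
    show "dsupp d ?h'" using h(2) sd by (rule dsupp_psub)
    show "?h' (d, []) = 0" by (simp add: idem_def arr_def pbasis_apply)
    show "?h' (d, [alpha]) = 0" using alpha(2) by (simp add: idem_def arr_def pbasis_apply)
  qed
  moreover have "h = padd ?s ?h'" by (rule ext) simp
  ultimately show ?thesis by blast
qed

lemma T2_sub:
  assumes T: "tsub Q T" "Iq \<subseteq> T" and aT: "arr Q alpha \<in> T"
  shows "T2 d \<subseteq> T"
proof
  fix z assume "z \<in> T2 d"
  then have z: "z \<in> TL d" "z (d, []) = 0" unfolding T2_def by auto
  then obtain h g where hg: "z = padd h g" "h \<in> kH Q" "dsupp d h" "g \<in> Iq" unfolding TL_def by blast
  have h0: "h (d, []) = 0" using z(2) hg Iq_0[of g d] by simp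
  obtain i where i: "i \<in> Iq" "h = padd (padd (smul (h (d, [])) (idem d)) (smul (h (d, [alpha])) (arr Q alpha))) i"
    using Gp[OF hg(2,3)] by blast
  have "padd (padd (smul (h (d, [])) (idem d)) (smul (h (d, [alpha])) (arr Q alpha))) i \<in> T"
    unfolding h0 smul_zero_left
    using tsub_padd[OF T(1)] tsub_smul[OF T(1) aT] tsub_zero[OF T(1)] i(1) T(2) by blast
  then have "h \<in> T" using i(2) by simp
  then show "z \<in> T" unfolding hg(1) using tsub_padd[OF T(1)] hg(4) T(2) by blast
qed

lemma T2_gen:
  assumes T: "tsub Q T" "Iq \<subseteq> T" and x: "x \<in> T" "x \<in> T2 d" "x \<notin> Iq"
  shows "arr Q alpha \<in> T"
proof -
  have z: "x \<in> TL d" "x (d, []) = 0" using x(2) unfolding T2_def by auto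
  then obtain h g where hg: "x = padd h g" "h \<in> kH Q" "dsupp d h" "g \<in> Iq" unfolding TL_def by blast
  have h0: "h (d, []) = 0" using z(2) hg Iq_0[of g d] by simp
  have hx: "h = psub x g" by (rule ext) (simp add: hg(1))
  have hT: "h \<in> T" unfolding hx using tsub_psub[OF T(1) x(1)] hg(4) T(2) by blast
  obtain i where i: "i \<in> Iq" "h = padd (padd (smul (h (d, [])) (idem d)) (smul (h (d, [alpha])) (arr Q alpha))) i"
    using Gp[OF hg(2,3)] by blast
  let ?c = "h (d, [alpha])"
  have hs: "smul ?c (arr Q alpha) = psub h i"
    by (rule ext) (subst (2) i(2), simp add: h0)
  have cT: "smul ?c (arr Q alpha) \<in> T" unfolding hs using tsub_psub[OF T(1) hT] i(1) T(2) by blast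
  have "?c \<noteq> 0"
  proof
    assume c: "?c = 0"
    have "h = i" by (subst i(2)) (rule ext, simp add: h0 c)
    then have "x \<in> Iq" using hg i(1) Iq_padd by simp
    then show False using x(3) by simp
  qed
  then have "smul (1 / ?c) (smul ?c (arr Q alpha)) = arr Q alpha" by (rule_tac ext) simp
  then show ?thesis using tsub_smul[OF T(1) cT] by metis
qed

lemma alpha_mult:
  assumes x: "x \<in> TL d"
  shows "psub (pmult Q (arr Q alpha) x) (smul (x (d, [])) (arr Q alpha)) \<in> Iq"
proof -
  obtain h g where hg: "x = padd h g" "h \<in> kH Q" "dsupp d h" "g \<in> Iq" using x unfolding TL_def by blast
  obtain i where i: "i \<in> Iq" "h = padd (padd (smul (h (d, [])) (idem d)) (smul (h (d, [alpha])) (arr Q alpha))) i"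
    using Gp[OF hg(2,3)] by blast
  have x0: "x (d, []) = h (d, [])" using hg Iq_0[of g d] by simp
  let ?a = "arr Q alpha"
  have ai: "pmult Q ?a (idem d) = ?a"
    unfolding arr_def idem_def pm_pbasis using alpha dv wf by (simp add: vCons)
  have "pmult Q ?a x = padd (padd (padd (smul (h (d, [])) ?a) (smul (h (d, [alpha])) (pmult Q ?a ?a)))
          (pmult Q ?a i)) (pmult Q ?a g)"
    unfolding hg(1) pm_padd_right pm_smul_right ai by (subst (1) i(2)) (simp add: pm_padd_right pm_smul_right ai)
  then have "psub (pmult Q ?a x) (smul (x (d, [])) ?a) =
      padd (padd (smul (h (d, [alpha])) (pmult Q ?a ?a)) (pmult Q ?a i)) (pmult Q ?a g)"
    unfolding x0 by (intro ext) simp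
  moreover have "padd (padd (smul (h (d, [alpha])) (pmult Q ?a ?a)) (pmult Q ?a i)) (pmult Q ?a g) \<in> Iq"
    using beta_alpha[OF alpha(1)] Iq_lmul[OF i(1) arr_kH[OF alpha(1)]] Iq_lmul[OF hg(4) arr_kH[OF alpha(1)]]
    by (intro Iq_padd Iq_smul)
  ultimately show ?thesis by simp
qed

end


context qset begin

lemma idem_gen:
  assumes T: "tsub Q T" "Iq \<subseteq> T" and iT: "idem y \<in> T"
  shows "TL y \<subseteq> T"
proof
  fix z assume "z \<in> TL y"
  then obtain h' g' where z: "z = padd h' g'" "h' \<in> kH Q" "dsupp y h'" "g' \<in> Iq" unfolding TL_def by blast
  have "pmult Q h' (idem y) \<in> T" by (rule tsub_pm[OF T(1) z(2) iT])
  then have "h' \<in> T" using pm_idem_right[OF z(2,3)] by simp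
  then show "z \<in> T" unfolding z(1) using tsub_padd[OF T(1)] z(4) T(2) by blast
qed

lemma nil_lemma:
  assumes T: "tsub Q T" "Iq \<subseteq> T" and h: "h \<in> kH Q" "dsupp y h" "h (y, []) = 0"
    and e: "psub (idem y) h \<in> T"
  shows "idem y \<in> T"
proof -
  define s where "s k = ((\<lambda>z. pmult Q z h) ^^ k) h" for k
  have s0: "s 0 = h" and sS: "s (Suc k) = pmult Q (s k) h" for k by (simp_all add: s_def)
  have l1: "lsupp 1 h" unfolding lsupp_def
  proof (intro allI impI)
    fix r assume nz: "h r \<noteq> 0"
    then have "fst r = y" using h(2) unfolding dsupp_def by blast
    show "1 \<le> length (snd r)"
    proof (rule ccontr)
      assume "\<not> 1 \<le> length (snd r)"
      moreover obtain y' xs where r: "r = (y', xs)" by (cases r)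
      ultimately have "xs = []" by (cases xs) auto
      then have "r = (y, [])" using \<open>fst r = y\<close> r by simp
      then show False using nz h(3) by simp
    qed
  qed
  have P: "s k \<in> kH Q \<and> dsupp y (s k) \<and> lsupp (Suc k) (s k) \<and> psub (idem y) (s k) \<in> T" for k
  proof (induction k)
    case 0 show ?case unfolding s0 using h l1 e by (simp only: One_nat_def[symmetric])
  next
    case (Suc k)
    have sk: "s k \<in> kH Q" "dsupp y (s k)" "lsupp (Suc k) (s k)" "psub (idem y) (s k) \<in> T"
      using Suc by blast+
    have a: "s (Suc k) \<in> kH Q" unfolding sS by (rule pm_kH[OF sk(1) h(1)])
    have b: "dsupp y (s (Suc k))" unfolding sS by (rule dsupp_pm[OF h(2)])
    have c: "lsupp (Suc (Suc k)) (s (Suc k))" using lsupp_pm[OF sk(3) l1] unfolding sS by simp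
    have pm1: "pmult Q (s k) (psub (idem y) h) = psub (s k) (s (Suc k))"
      unfolding pm_psub_right sS pm_idem_right[OF sk(1,2)] ..
    have "pmult Q (s k) (psub (idem y) h) \<in> T" by (rule tsub_pm[OF T(1) sk(1) e])
    then have "padd (psub (idem y) (s k)) (psub (s k) (s (Suc k))) \<in> T"
      unfolding pm1 using tsub_padd[OF T(1) sk(4)] by blast
    moreover have "padd (psub (idem y) (s k)) (psub (s k) (s (Suc k))) = psub (idem y) (s (Suc k))"
      by (rule ext) simp
    ultimately have d: "psub (idem y) (s (Suc k)) \<in> T" by simp
    show ?case using a b c d by blast
  qed
  obtain k where k: "m = Suc k" using m1 by (cases m) auto
  have "s k \<in> Iq" using P[of k] k Iq_m by blast
  then have "s k \<in> T" using T(2) by blast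
  then have "padd (psub (idem y) (s k)) (s k) \<in> T" using tsub_padd[OF T(1)] P[of k] by blast
  moreover have "padd (psub (idem y) (s k)) (s k) = idem y" by (rule ext) simp
  ultimately show ?thesis by simp
qed

lemma maximal_T2:
  assumes yv: "y \<in> verts Q"
  shows "maximal_sub Q (Pmod Q Iq y) (emb ` T2 y)"
  unfolding maximal_sub_def
proof (intro conjI ballI impI)
  show "emb ` T2 y \<in> submods Q (Pmod Q Iq y)"
    using tsub_T2 Iq_T2 T2_TL by (subst submods_emb[OF yv]) blast
  have iTL: "idem y \<in> TL y" using dsupp_TL[OF idem_kH[OF yv] dsupp_idem] .
  have iT2: "idem y \<notin> T2 y" unfolding T2_def by (simp add: idem_def pbasis_apply)
  show "emb ` T2 y \<noteq> fst (Pmod Q Iq y)" unfolding Pmod_eq[OF yv] fst_conv emb_image_eq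
    using iTL iT2 by blast
next
  fix N' assume N': "N' \<in> submods Q (Pmod Q Iq y)" and sub: "emb ` T2 y \<subseteq> N'"
  define T where "T = {x. emb x \<in> N'}"
  have TT: "N' = emb ` T" "tsub Q T" "Iq \<subseteq> T" "T \<subseteq> TL y"
    using submods_T[OF yv N'] unfolding T_def[symmetric] by blast+
  have T2T: "T2 y \<subseteq> T" using sub TT(1) by simp
  show "N' = emb ` T2 y \<or> N' = fst (Pmod Q Iq y)"
  proof (cases "T \<subseteq> T2 y")
    case True then show ?thesis using T2T TT(1) by auto
  next
    case False
    then obtain x where x: "x \<in> T" "x \<notin> T2 y" by blast
    then have xTL: "x \<in> TL y" using TT(4) by blast
    then have c: "x (y, []) \<noteq> 0" using x(2) unfolding T2_def by blast
    let ?c = "x (y, [])"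
    have "psub x (smul ?c (idem y)) \<in> TL y"
      using tsub_psub[OF tsub_TL xTL tsub_smul[OF tsub_TL dsupp_TL[OF idem_kH[OF yv] dsupp_idem]]] .
    moreover have "psub x (smul ?c (idem y)) (y, []) = 0" by (simp add: idem_def pbasis_apply)
    ultimately have "psub x (smul ?c (idem y)) \<in> T2 y" unfolding T2_def by blast
    then have "psub x (smul ?c (idem y)) \<in> T" using T2T by blast
    then have "psub x (psub x (smul ?c (idem y))) \<in> T" using tsub_psub[OF TT(2) x(1)] by blast
    moreover have "psub x (psub x (smul ?c (idem y))) = smul ?c (idem y)" by (rule ext) simp
    ultimately have "smul ?c (idem y) \<in> T" by simp
    then have m1: "smul (1 / ?c) (smul ?c (idem y)) \<in> T" by (rule tsub_smul[OF TT(2)])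
    have eq: "smul (1 / ?c) (smul ?c (idem y)) = idem y" by (rule ext) (simp add: c)
    from m1 have "idem y \<in> T" by (simp only: eq)
    then have "TL y \<subseteq> T" by (rule idem_gen[OF TT(2,3)])
    then have "T = TL y" using TT(4) by blast
    then show ?thesis using TT(1) Pmod_eq[OF yv] by simp
  qed
qed

lemma maximal_contains_T2:
  assumes yv: "y \<in> verts Q" and N: "maximal_sub Q (Pmod Q Iq y) N"
  shows "emb ` T2 y \<subseteq> N"
proof -
  have Ns: "N \<in> submods Q (Pmod Q Iq y)" and Nne: "N \<noteq> fst (Pmod Q Iq y)"
    and Nmax: "\<forall>N'\<in>submods Q (Pmod Q Iq y). N \<subseteq> N' \<longrightarrow> N' = N \<or> N' = fst (Pmod Q Iq y)"
    using N unfolding maximal_sub_def by blast+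
  define T where "T = {x. emb x \<in> N}"
  have TT: "N = emb ` T" "tsub Q T" "Iq \<subseteq> T" "T \<subseteq> TL y"
    using submods_T[OF yv Ns] unfolding T_def[symmetric] by blast+
  show ?thesis
  proof (rule ccontr)
    assume "\<not> emb ` T2 y \<subseteq> N"
    then obtain x where x: "x \<in> T2 y" "x \<notin> T" using TT(1) by auto
    define S where "S = {padd a b | a b. a \<in> T \<and> b \<in> T2 y}"
    have TS: "T \<subseteq> S"
    proof
      fix a assume "a \<in> T"
      moreover have "pzero \<in> T2 y" by (rule tsub_zero[OF tsub_T2])
      ultimately have "padd a pzero \<in> S" unfolding S_def by blast
      then show "a \<in> S" by simp
    qed
    have xS: "x \<in> S"
    proof -
      have "padd pzero x \<in> S" unfolding S_def using tsub_zero[OF TT(2)] x(1) by blast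
      then show ?thesis by simp
    qed
    have STL: "S \<subseteq> TL y"
    proof
      fix z assume "z \<in> S"
      then obtain a b where "z = padd a b" "a \<in> T" "b \<in> T2 y" unfolding S_def by blast
      then show "z \<in> TL y" using tsub_padd[OF tsub_TL] TT(4) T2_TL by blast
    qed
    have tS: "tsub Q S"
      unfolding tsub_def
    proof (intro conjI ballI)
      show "S \<subseteq> kH Q" using STL TL_kH by blast
      show "pzero \<in> S" using TS tsub_zero[OF TT(2)] by blast
    next
      fix z w :: "('v,'e,'k) elem" assume "z \<in> S" "w \<in> S"
      then obtain a1 b1 a2 b2 where z: "z = padd a1 b1" "a1 \<in> T" "b1 \<in> T2 y"
        and w: "w = padd a2 b2" "a2 \<in> T" "b2 \<in> T2 y" unfolding S_def by blast
      have "padd z w = padd (padd a1 a2) (padd b1 b2)" by (rule ext) (simp add: z w add_ac)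
      moreover have "padd a1 a2 \<in> T" "padd b1 b2 \<in> T2 y"
        using tsub_padd[OF TT(2)] tsub_padd[OF tsub_T2] z w by blast+
      ultimately show "padd z w \<in> S" unfolding S_def by blast
    next
      fix u z :: "('v,'e,'k) elem" assume u: "u \<in> kH Q" and "z \<in> S"
      then obtain a b where z: "z = padd a b" "a \<in> T" "b \<in> T2 y" unfolding S_def by blast
      have "pmult Q u z = padd (pmult Q u a) (pmult Q u b)" unfolding z(1) by (rule pm_padd_right)
      moreover have "pmult Q u a \<in> T" "pmult Q u b \<in> T2 y"
        using tsub_pm[OF TT(2) u] tsub_pm[OF tsub_T2 u] z by blast+
      ultimately show "pmult Q u z \<in> S" unfolding S_def by blast
    qed
    have "emb ` S \<in> submods Q (Pmod Q Iq y)"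
      using tS TS TT(3) STL by (subst submods_emb[OF yv]) blast
    moreover have "N \<subseteq> emb ` S" using TT(1) TS by simp
    ultimately have "emb ` S = N \<or> emb ` S = fst (Pmod Q Iq y)" using Nmax by blast
    moreover have "emb ` S \<noteq> N" using TT(1) xS x(2) by auto
    ultimately have "emb ` S = emb ` TL y" using Pmod_eq[OF yv] by simp
    then have "S = TL y" by simp
    moreover have "idem y \<in> TL y" using dsupp_TL[OF idem_kH[OF yv] dsupp_idem] .
    ultimately obtain a b where ab: "idem y = padd a b" "a \<in> T" "b \<in> T2 y" unfolding S_def by blast
    then have "b \<in> TL y" "b (y, []) = 0" unfolding T2_def by auto
    then obtain h g where hg: "b = padd h g" "h \<in> kH Q" "dsupp y h" "g \<in> Iq" unfolding TL_def by blast
    have h0: "h (y, []) = 0" using \<open>b (y, []) = 0\<close> hg Iq_0[of g y] by simp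
    have "psub (idem y) h = padd a g" by (rule ext) (simp add: ab(1) hg(1))
    moreover have "padd a g \<in> T" using tsub_padd[OF TT(2) ab(2)] hg(4) TT(3) by blast
    ultimately have "psub (idem y) h \<in> T" by simp
    then have "idem y \<in> T" by (rule nil_lemma[OF TT(2,3) hg(2,3) h0])
    then have "TL y \<subseteq> T" by (rule idem_gen[OF TT(2,3)])
    then have "T = TL y" using TT(4) by blast
    then show False using Nne TT(1) Pmod_eq[OF yv] by simp
  qed
qed

lemma rad_eq:
  assumes yv: "y \<in> verts Q"
  shows "fst (rad Q (Pmod Q Iq y)) = emb ` T2 y"
proof -
  have "fst (Pmod Q Iq y) \<inter> \<Inter>{N. maximal_sub Q (Pmod Q Iq y) N} = emb ` T2 y"
  proof
    show "fst (Pmod Q Iq y) \<inter> \<Inter>{N. maximal_sub Q (Pmod Q Iq y) N} \<subseteq> emb ` T2 y"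
      using maximal_T2[OF yv] by blast
    have "emb ` T2 y \<subseteq> fst (Pmod Q Iq y)" unfolding Pmod_eq[OF yv] using T2_TL by simp
    then show "emb ` T2 y \<subseteq> fst (Pmod Q Iq y) \<inter> \<Inter>{N. maximal_sub Q (Pmod Q Iq y) N}"
      using maximal_contains_T2[OF yv] by blast
  qed
  then show ?thesis unfolding rad_def by simp
qed

end


context qmain begin


lemma T2_form:
  assumes z: "z \<in> T2 d"
  shows "\<exists>j\<in>Iq. z = padd (smul (z (d, [alpha])) (arr Q alpha)) j"
proof -
  have z0: "z \<in> TL d" "z (d, []) = 0" using z unfolding T2_def by auto
  then obtain h g where hg: "z = padd h g" "h \<in> kH Q" "dsupp d h" "g \<in> Iq" unfolding TL_def by blast
  have h0: "h (d, []) = 0" using z0(2) hg Iq_0[of g d] by simp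
  have h1: "z (d, [alpha]) = h (d, [alpha])" using hg Iq_1[of g d alpha] by simp
  obtain i where i: "i \<in> Iq" "h = padd (padd (smul (h (d, [])) (idem d)) (smul (h (d, [alpha])) (arr Q alpha))) i"
    using Gp[OF hg(2,3)] by blast
  have "z = padd (smul (z (d, [alpha])) (arr Q alpha)) (padd i g)"
  proof (rule ext)
    fix r
    have "h r = (smul (h (d, [])) (idem d)) r + (smul (h (d, [alpha])) (arr Q alpha)) r + i r"
      using fun_cong[OF i(2), of r] by (simp only: padd_apply)
    then show "z r = padd (smul (z (d, [alpha])) (arr Q alpha)) (padd i g) r"
      unfolding hg(1) padd_apply using h0 h1 Iq_1[OF hg(4), of d alpha] by simp
  qed
  then show ?thesis using Iq_padd[OF i(1) hg(4)] by blast
qed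


end


context qmain begin
lemma soc_eq: "soc Q (Pmod Q Iq d) = (emb ` T2 d, emb ` Iq)"
proof -
  let ?M = "Pmod Q Iq d"
  let ?A = "emb ` T2 d"
  have aT2: "arr Q alpha \<in> T2 d" unfolding T2_def
    using dsupp_TL[OF arr_kH[OF alpha(1)], of d] dsupp_arr[of alpha] alpha by (simp add: arr_def pbasis_apply)
  have As: "?A \<in> submods Q ?M" using tsub_T2 Iq_T2 T2_TL by (subst submods_emb[OF dv]) blast
  have sndM: "snd ?M = emb ` Iq" using Pmod_eq[OF dv] by simp
  have Asimple: "simple_mod Q (?A, emb ` Iq)"
    unfolding simple_mod_def fst_conv snd_conv
  proof (intro conjI ballI)
    show "?A \<noteq> emb ` Iq" unfolding emb_image_eq using aT2 arr_notin_Iq by blast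
  next
    fix N assume "N \<in> submods Q (?A, emb ` Iq)"
    then have N: "submod Q N" "emb ` Iq \<subseteq> N" "N \<subseteq> ?A" unfolding submods_def by auto
    define T where "T = {x. emb x \<in> N}"
    have NT: "N = emb ` T" unfolding T_def by (rule image_emb_T) (use N(3) in blast)
    have tT: "tsub Q T" unfolding T_def by (rule submod_tsub[OF N(1)])
    have IT: "Iq \<subseteq> T" using N(2) NT by simp
    have TT2: "T \<subseteq> T2 d" using N(3) NT by simp
    show "N = emb ` Iq \<or> N = ?A"
    proof (cases "T \<subseteq> Iq")
      case True then show ?thesis using IT NT by auto
    next
      case False
      then obtain x where x: "x \<in> T" "x \<notin> Iq" by blast
      have "arr Q alpha \<in> T" by (rule T2_gen[OF tT IT x(1) _ x(2)]) (use x TT2 in blast)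
      then have "T2 d \<subseteq> T" by (rule T2_sub[OF tT IT])
      then show ?thesis using TT2 NT by auto
    qed
  qed
  have simple_sub: "N \<subseteq> ?A" if Ns: "N \<in> submods Q ?M" and sN: "simple_mod Q (N, snd ?M)" for N
  proof -
    define T where "T = {x. emb x \<in> N}"
    have TT: "N = emb ` T" "tsub Q T" "Iq \<subseteq> T" "T \<subseteq> TL d"
      using submods_T[OF dv Ns] unfolding T_def[symmetric] by blast+
    show "N \<subseteq> ?A"
    proof (rule ccontr)
      assume "\<not> N \<subseteq> ?A"
      then obtain x where x: "x \<in> T" "x \<notin> T2 d" using TT(1) by auto
      then have xTL: "x \<in> TL d" using TT(4) by blast
      then have c: "x (d, []) \<noteq> 0" using x(2) unfolding T2_def by blast
      let ?c = "x (d, [])"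
      have ax: "pmult Q (arr Q alpha) x \<in> T" by (rule tsub_pm[OF TT(2) arr_kH[OF alpha(1)] x(1)])
      have "psub (pmult Q (arr Q alpha) x) (smul ?c (arr Q alpha)) \<in> T"
        using alpha_mult[OF xTL] TT(3) by blast
      then have "psub (pmult Q (arr Q alpha) x) (psub (pmult Q (arr Q alpha) x) (smul ?c (arr Q alpha))) \<in> T"
        using tsub_psub[OF TT(2) ax] by blast
      moreover have "psub (pmult Q (arr Q alpha) x) (psub (pmult Q (arr Q alpha) x) (smul ?c (arr Q alpha)))
          = smul ?c (arr Q alpha)" by (rule ext) simp
      ultimately have "smul ?c (arr Q alpha) \<in> T" by simp
      then have m1: "smul (1 / ?c) (smul ?c (arr Q alpha)) \<in> T" by (rule tsub_smul[OF TT(2)])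
      have eq: "smul (1 / ?c) (smul ?c (arr Q alpha)) = arr Q alpha" by (rule ext) (simp add: c)
      from m1 have "arr Q alpha \<in> T" by (simp only: eq)
      then have T2T: "T2 d \<subseteq> T" by (rule T2_sub[OF TT(2,3)])
      have "?A \<in> submods Q (N, snd ?M)"
        unfolding submods_def mem_Collect_eq fst_conv snd_conv sndM
      proof (intro conjI)
        show "submod Q ?A" by (rule tsub_submod[OF tsub_T2])
        show "emb ` Iq \<subseteq> ?A" using Iq_T2 by simp
        show "?A \<subseteq> N" unfolding TT(1) using T2T by simp
      qed
      moreover have "\<forall>N'\<in>submods Q (N, snd ?M). N' = snd ?M \<or> N' = N"
        using sN unfolding simple_mod_def fst_conv snd_conv by (rule conjunct2)
      ultimately have "?A = snd ?M \<or> ?A = N" by (rule bspec[rotated])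
      moreover have "?A \<noteq> snd ?M" unfolding sndM emb_image_eq using aT2 arr_notin_Iq by blast
      ultimately have "?A = N" by blast
      then have "T2 d = T" using TT(1) by simp
      then show False using x by blast
    qed
  qed
  have "\<Inter>{S. S \<in> submods Q ?M \<and> (\<forall>N\<in>submods Q ?M. simple_mod Q (N, snd ?M) \<longrightarrow> N \<subseteq> S)} = ?A"
  proof
    show "\<Inter>{S. S \<in> submods Q ?M \<and> (\<forall>N\<in>submods Q ?M. simple_mod Q (N, snd ?M) \<longrightarrow> N \<subseteq> S)} \<subseteq> ?A"
      using As simple_sub by blast
    show "?A \<subseteq> \<Inter>{S. S \<in> submods Q ?M \<and> (\<forall>N\<in>submods Q ?M. simple_mod Q (N, snd ?M) \<longrightarrow> N \<subseteq> S)}"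
    proof (rule Inter_greatest)
      fix X assume "X \<in> {S. S \<in> submods Q ?M \<and> (\<forall>N\<in>submods Q ?M. simple_mod Q (N, snd ?M) \<longrightarrow> N \<subseteq> S)}"
      then have "\<forall>N\<in>submods Q ?M. simple_mod Q (N, snd ?M) \<longrightarrow> N \<subseteq> X" by blast
      moreover have "simple_mod Q (?A, snd ?M)" using Asimple sndM by simp
      ultimately show "?A \<subseteq> X" using As by blast
    qed
  qed
  then show ?thesis unfolding soc_def using sndM by simp
qed


end


context qmain begin
lemma Smod_eq: "y \<in> verts Q \<Longrightarrow> Smod Q Iq y = (emb ` TL y, emb ` T2 y)"
  unfolding Smod_def using Pmod_eq rad_eq by simp

lemma idem_alpha: "pmult Q (idem (tgt Q alpha)) (arr Q alpha) = arr Q alpha"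
  unfolding arr_def idem_def pm_pbasis using alpha dv wf by (simp add: vCons)

lemma z_alpha:
  assumes z: "z \<in> TL (tgt Q alpha)"
  shows "\<exists>j\<in>Iq. pmult Q z (arr Q alpha) = padd (smul (z (tgt Q alpha, [])) (arr Q alpha)) j"
proof -
  let ?y = "tgt Q alpha"
  obtain h g where hg: "z = padd h g" "h \<in> kH Q" "dsupp ?y h" "g \<in> Iq" using z unfolding TL_def by blast
  let ?w = "pmult Q h (arr Q alpha)"
  have wk: "?w \<in> kH Q" by (rule pm_kH[OF hg(2) arr_kH[OF alpha(1)]])
  have wd: "dsupp d ?w" using dsupp_pm[OF dsupp_arr[of alpha]] alpha(2) by simp
  have w0: "?w (d, []) = 0" by (simp add: pm_short0 arr_def pbasis_apply)
  have va: "valid_path Q (d, [alpha])" using alpha dv wf by (simp add: vCons)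
  have w1: "?w (d, [alpha]) = h (?y, [])"
    using va alpha(2) by (simp add: pm_short1 arr_def pbasis_apply)
  have z0: "z (?y, []) = h (?y, [])" using hg Iq_0[of g ?y] by simp
  obtain i where i: "i \<in> Iq" "?w = padd (padd (smul (?w (d, [])) (idem d)) (smul (?w (d, [alpha])) (arr Q alpha))) i"
    using Gp[OF wk wd] by blast
  have gI: "pmult Q g (arr Q alpha) \<in> Iq" by (rule Iq_rmul[OF hg(4) arr_kH[OF alpha(1)]])
  have "pmult Q z (arr Q alpha) = padd (smul (z (?y, [])) (arr Q alpha)) (padd i (pmult Q g (arr Q alpha)))"
  proof (rule ext)
    fix r
    have e1: "pmult Q z (arr Q alpha) r = ?w r + pmult Q g (arr Q alpha) r"
      unfolding hg(1) pm_padd_left by (simp only: padd_apply)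
    have e2: "?w r = (smul (?w (d, [])) (idem d)) r + (smul (?w (d, [alpha])) (arr Q alpha)) r + i r"
      using fun_cong[OF i(2), of r] by (simp only: padd_apply)
    show "pmult Q z (arr Q alpha) r = padd (smul (z (?y, [])) (arr Q alpha)) (padd i (pmult Q g (arr Q alpha))) r"
      unfolding e1 e2 w0 w1 z0 by (simp add: add_ac)
  qed
  then show ?thesis using Iq_padd[OF i(1) gI] by blast
qed


end


context qmain begin
lemma iso_exists:
  "mod_iso Q (Smod Q Iq (tgt Q alpha)) (soc Q (Pmod Q Iq d))"
proof -
  let ?y = "tgt Q alpha"
  let ?a = "arr Q alpha"
  have yv: "?y \<in> verts Q" using wf alpha(1) by blast
  define \<phi> where "\<phi> x = emb (pmult Q (x 0) ?a)" for x :: "('v,'e,'k) vec"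
  have phi: "\<phi> (emb z) = emb (pmult Q z ?a)" for z unfolding \<phi>_def by simp
  show ?thesis
    unfolding mod_iso_def Smod_eq[OF yv] soc_eq fst_conv snd_conv
  proof (intro exI[of _ \<phi>] conjI ballI)
    fix x assume "x \<in> emb ` TL ?y"
    then obtain z where z: "z \<in> TL ?y" "x = emb z" by blast
    have "dsupp d (pmult Q z ?a)" using dsupp_pm[OF dsupp_arr[of alpha], of z] alpha(2) by simp
    then have "pmult Q z ?a \<in> TL d"
      by (rule dsupp_TL[OF pm_kH[OF TL_kH[OF z(1)] arr_kH[OF alpha(1)]]])
    moreover have "pmult Q z ?a (d, []) = 0" by (simp add: pm_short0 arr_def pbasis_apply)
    ultimately show "\<phi> x \<in> emb ` T2 d" unfolding z(2) phi T2_def by simp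
  next
    fix x y assume "x \<in> emb ` TL ?y" "y \<in> emb ` TL ?y"
    then obtain z w where zw: "x = emb z" "y = emb w" by blast
    have "vsub (\<phi> (vadd x y)) (vadd (\<phi> x) (\<phi> y)) = emb pzero"
      unfolding zw vadd_emb phi vsub_emb pm_padd_left by (rule arg_cong[where f=emb]) (rule ext, simp)
    then show "vsub (\<phi> (vadd x y)) (vadd (\<phi> x) (\<phi> y)) \<in> emb ` Iq" using Iq_zero by simp
  next
    fix u :: "('v,'e,'k) elem" and x assume "u \<in> kH Q" "x \<in> emb ` TL ?y"
    then obtain z where z: "x = emb z" by blast
    have "vsub (\<phi> (vact Q u x)) (vact Q u (\<phi> x)) = emb pzero"
      unfolding z vact_emb phi vsub_emb pm_assoc_arr[OF alpha(1)]
      by (rule arg_cong[where f=emb]) (rule ext, simp)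
    then show "vsub (\<phi> (vact Q u x)) (vact Q u (\<phi> x)) \<in> emb ` Iq" using Iq_zero by simp
  next
    fix x assume "x \<in> emb ` TL ?y"
    then obtain z where z: "z \<in> TL ?y" "x = emb z" by blast
    obtain j where j: "j \<in> Iq" "pmult Q z ?a = padd (smul (z (?y, [])) ?a) j" using z_alpha[OF z(1)] by blast
    have "pmult Q z ?a \<in> Iq \<longleftrightarrow> z (?y, []) = 0"
    proof
      assume "pmult Q z ?a \<in> Iq"
      then have "psub (pmult Q z ?a) j \<in> Iq" using Iq_psub j(1) by blast
      moreover have "psub (pmult Q z ?a) j = smul (z (?y, [])) ?a" by (rule ext) (simp add: j(2))
      ultimately show "z (?y, []) = 0" using smul_arr_Iq by simp
    next
      assume "z (?y, []) = 0"
      then have "pmult Q z ?a = j" unfolding j(2) by (rule_tac ext) simp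
      then show "pmult Q z ?a \<in> Iq" using j(1) by simp
    qed
    then show "\<phi> x \<in> emb ` Iq \<longleftrightarrow> x \<in> emb ` T2 ?y" unfolding z(2) phi T2_def using z(1) by simp
  next
    fix v assume "v \<in> emb ` T2 d"
    then obtain z where z: "z \<in> T2 d" "v = emb z" by blast
    obtain j where j: "j \<in> Iq" "z = padd (smul (z (d, [alpha])) ?a) j" using T2_form[OF z(1)] by blast
    let ?c = "z (d, [alpha])"
    have xT: "smul ?c (idem ?y) \<in> TL ?y"
      using dsupp_TL[OF smul_kH[OF idem_kH[OF yv]] dsupp_smul[OF dsupp_idem]] .
    have "\<phi> (emb (smul ?c (idem ?y))) = emb (smul ?c ?a)" unfolding phi pm_smul_left idem_alpha ..
    then have "vsub v (\<phi> (emb (smul ?c (idem ?y)))) = emb (psub z (smul ?c ?a))" unfolding z(2) by (simp only: vsub_emb)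
    moreover have "psub z (smul ?c ?a) = j"
    proof (rule ext)
      fix r
      have "z r = ?c * ?a r + j r" using fun_cong[OF j(2), of r] by (simp only: padd_apply smul_apply)
      then show "psub z (smul ?c ?a) r = j r" by simp
    qed
    ultimately have "vsub v (\<phi> (emb (smul ?c (idem ?y)))) \<in> emb ` Iq" using j(1) by simp
    then show "\<exists>x\<in>emb ` TL ?y. vsub v (\<phi> x) \<in> emb ` Iq" using xT by blast
  qed
qed


end


context qmain begin
lemma iso_unique:
  assumes yv: "y \<in> verts Q" and iso: "mod_iso Q (Smod Q Iq y) (soc Q (Pmod Q Iq d))"
  shows "y = tgt Q alpha"
proof (rule ccontr)
  assume ne: "y \<noteq> tgt Q alpha"
  let ?y0 = "tgt Q alpha"
  let ?a = "arr Q alpha"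
  have y0v: "?y0 \<in> verts Q" using wf alpha(1) by blast
  obtain \<phi> where P: "(\<forall>x\<in>emb ` TL y. \<phi> x \<in> emb ` T2 d)
    \<and> (\<forall>x\<in>emb ` TL y. \<forall>z\<in>emb ` TL y. vsub (\<phi> (vadd x z)) (vadd (\<phi> x) (\<phi> z)) \<in> emb ` Iq)
    \<and> (\<forall>u\<in>kH Q. \<forall>x\<in>emb ` TL y. vsub (\<phi> (vact Q u x)) (vact Q u (\<phi> x)) \<in> emb ` Iq)
    \<and> (\<forall>x\<in>emb ` TL y. \<phi> x \<in> emb ` Iq \<longleftrightarrow> x \<in> emb ` T2 y)
    \<and> (\<forall>v\<in>emb ` T2 d. \<exists>x\<in>emb ` TL y. vsub v (\<phi> x) \<in> emb ` Iq)"
    using iso unfolding mod_iso_def Smod_eq[OF yv] soc_eq fst_conv snd_conv by (rule exE)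
  note p1 = conjunct1[OF P]
  note p2 = conjunct1[OF conjunct2[OF P]]
  note p3 = conjunct1[OF conjunct2[OF conjunct2[OF P]]]
  note p4 = conjunct1[OF conjunct2[OF conjunct2[OF conjunct2[OF P]]]]
  have zTL: "emb pzero \<in> emb ` TL y" using tsub_zero[OF tsub_TL] by simp
  obtain w where w: "\<phi> (emb pzero) = emb w" "w \<in> T2 d" using p1 zTL by blast
  have "vsub (\<phi> (vadd (emb pzero) (emb pzero))) (vadd (\<phi> (emb pzero)) (\<phi> (emb pzero))) \<in> emb ` Iq"
    using p2 zTL by blast
  then have "emb (psub w (padd w w)) \<in> emb ` Iq" unfolding vadd_emb padd_zero_right w(1) vsub_emb .
  then have "psub w (padd w w) \<in> Iq" by simp
  then have "smul (-1) (psub w (padd w w)) \<in> Iq" by (rule Iq_smul)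
  moreover have "smul (-1) (psub w (padd w w)) = w" by (rule ext) simp
  ultimately have wI: "w \<in> Iq" by simp
  have iTL: "emb (idem y) \<in> emb ` TL y" using dsupp_TL[OF idem_kH[OF yv] dsupp_idem] by simp
  obtain z where z: "\<phi> (emb (idem y)) = emb z" "z \<in> T2 d" using p1 iTL by blast
  have e0: "pmult Q (idem ?y0) (idem y) = pzero" unfolding idem_def pm_pbasis using ne by simp
  have "vsub (\<phi> (vact Q (idem ?y0) (emb (idem y)))) (vact Q (idem ?y0) (\<phi> (emb (idem y)))) \<in> emb ` Iq"
    using p3 idem_kH[OF y0v] iTL by blast
  then have "emb (psub w (pmult Q (idem ?y0) z)) \<in> emb ` Iq"
    unfolding vact_emb e0 w(1) z(1) vsub_emb .
  then have "psub w (pmult Q (idem ?y0) z) \<in> Iq" by simp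
  then have "psub w (psub w (pmult Q (idem ?y0) z)) \<in> Iq" using Iq_psub wI by blast
  moreover have "psub w (psub w (pmult Q (idem ?y0) z)) = pmult Q (idem ?y0) z" by (rule ext) simp
  ultimately have ezI: "pmult Q (idem ?y0) z \<in> Iq" by simp
  obtain j where j: "j \<in> Iq" "z = padd (smul (z (d, [alpha])) ?a) j" using T2_form[OF z(2)] by blast
  let ?c = "z (d, [alpha])"
  have "pmult Q (idem ?y0) z = padd (smul ?c ?a) (pmult Q (idem ?y0) j)"
    by (subst j(2)) (simp only: pm_padd_right pm_smul_right idem_alpha)
  then have "psub (pmult Q (idem ?y0) z) (pmult Q (idem ?y0) j) = smul ?c ?a" by (intro ext) simp
  moreover have "psub (pmult Q (idem ?y0) z) (pmult Q (idem ?y0) j) \<in> Iq"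
    using Iq_psub[OF ezI Iq_lmul[OF j(1) idem_kH[OF y0v]]] .
  ultimately have "smul ?c ?a \<in> Iq" by simp
  then have c0: "?c = 0" by (rule smul_arr_Iq)
  have "z = j" by (subst j(2)) (rule ext, simp add: c0)
  then have "\<phi> (emb (idem y)) \<in> emb ` Iq" using z(1) j(1) by simp
  then have "emb (idem y) \<in> emb ` T2 y" using p4 iTL by blast
  then have "idem y \<in> T2 y" by simp
  then show False unfolding T2_def by (simp add: idem_def pbasis_apply)
qed


end


context qmain begin
lemma rho_eq: "rho Q Iq d = tgt Q alpha"
  unfolding rho_def
proof (rule the_equality)
  show "tgt Q alpha \<in> verts Q \<and> mod_iso Q (Smod Q Iq (tgt Q alpha)) (soc Q (Pmod Q Iq d))"
    using wf alpha(1) iso_exists by blast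
next
  fix y assume "y \<in> verts Q \<and> mod_iso Q (Smod Q Iq y) (soc Q (Pmod Q Iq d))"
  then show "y = tgt Q alpha" using iso_unique by blast
qed


end


theorem lemma3p3:
  fixes Q :: "('v,'e) quiver" and sig :: "('v,'e,'k::field) elem set" and m :: nat and d :: 'v
  assumes "finite (verts Q)" and "finite (arrs Q)"
    and "\<forall>a\<in>arrs Q. src Q a \<in> verts Q \<and> tgt Q a \<in> verts Q"
    and "sig \<subseteq> kH Q" and "m \<ge> 1"
    and "ideal_pow Q (arrow_ideal Q) m \<subseteq> ideal_gen Q sig"
    and "ideal_gen Q sig \<subseteq> ideal_pow Q (arrow_ideal Q) 2"
    and "fin_dim_quot Q (ideal_gen Q sig)"
    and "condF Q (ideal_gen Q sig)"
    and "d \<in> Dset Q (ideal_gen Q sig)"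
  shows "\<exists>\<alpha>. \<alpha> \<in> arrs Q \<and> src Q \<alpha> = d
           \<and> (\<forall>\<alpha>'. \<alpha>' \<in> arrs Q \<and> src Q \<alpha>' = d \<longrightarrow> \<alpha>' = \<alpha>)
           \<and> tgt Q \<alpha> = rho Q (ideal_gen Q sig) d
           \<and> (\<forall>\<beta>\<in>arrs Q. src Q \<beta> = rho Q (ideal_gen Q sig) d \<longrightarrow>
                pmult Q (arr Q \<beta>) (arr Q \<alpha>) \<in> ideal_gen Q sig)"
proof -
  have dv: "d \<in> verts Q" and ml: "mod_length Q (Pmod Q (ideal_gen Q sig) d) = 2"
    using assms(10) unfolding Dset_def by auto
  interpret M: qmain Q sig m d
    by unfold_locales (use assms dv ml in auto)
  show ?thesis
  proof (intro exI[of _ M.alpha] conjI allI impI ballI)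
    show "M.alpha \<in> arrs Q" "src Q M.alpha = d" using M.alpha by auto
    show "tgt Q M.alpha = rho Q (ideal_gen Q sig) d" using M.rho_eq by simp
  next
    fix a assume "a \<in> arrs Q \<and> src Q a = d"
    then show "a = M.alpha" using M.alpha_unique by blast
  next
    fix b assume "b \<in> arrs Q"
    then show "pmult Q (arr Q b) (arr Q M.alpha) \<in> ideal_gen Q sig" by (rule M.beta_alpha)
  qed
qed


end
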